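(* Let $H$, $\dot\mu_\theta$, the scanning family $\{A_z\}$ and the transformation $\mathcal{K}$ be as in the context, with $\mathcal{C}_z$ nonsingular for all $z\in\mathbb{R}$. Let $b$ be as in the context and let $Z$ be any random vector in $\mathbb{R}^q$ (not necessarily Gaussian) defined on the same probability space, and set $\tilde\xi(\gamma,\varphi)=b(\gamma,\varphi)-\int\gamma\dot\mu_\theta^TdH\,Z$. Then for any fixed $\varphi\in L_2(\mathbb{R},F)$ the process $w(\gamma,\varphi)=\tilde\xi(\mathcal{K}\gamma,\varphi)$, $\gamma\in L_2(\mathbb{R}^p,H)$, is a Brownian motion in $\gamma$, i.e., a zero-mean Gaussian process with covariance $\int\gamma_1\gamma_2dH\int\varphi^2dF$.
   Context: $H$ is a distribution function on $\mathbb{R}^p$, $F$ one on $\mathbb{R}$; $\dot\mu_\theta:\mathbb{R}^p\to\mathbb{R}^q$ has coordinates in $L_2(H)$ with $\int\dot\mu_\theta\dot\mu_\theta^TdH$ positive definite. A scanning family is a family of measurable $A_z\subset\mathbb{R}^p$, $z\in\mathbb{R}$, nondecreasing in $z$, with $H(A_{-\infty})=0$, $H(A_\infty)=1$, $z\mapsto H(A_z)$ strictly increasing and absolutely continuous. $z(x)=\inf\{z:A_z\ni x\}$, $\mathcal{C}_z=\int_{A_z^c}\dot\mu_\theta\dot\mu_\theta^TdH$, $\mathcal{T}\gamma(x)=\int_{A_{z(x)}}\gamma(y)\dot\mu_\theta^T(y)\mathcal{C}_{z(y)}^{-1}dH(y)\dot\mu_\theta(x)$, $\mathcal{K}\gamma=\gamma-\mathcal{T}\gamma$.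 $b$ is the zero-mean Gaussian process indexed by $(\gamma,\varphi)\in L_2(H)\times L_2(F)$, bilinear, with $Eb(\gamma_1,\varphi_1)b(\gamma_2,\varphi_2)=\int\gamma_1\gamma_2dH\int\varphi_1\varphi_2dF$. *)

theory Defs
  imports "HOL-Probability.Probability"
begin

text \<open>Square-integrable real functions with respect to a measure M (as functions,
  not equivalence classes).\<close>
definition L2 :: "'a measure \<Rightarrow> ('a \<Rightarrow> real) set" where
  "L2 M = {f. f \<in> borel_measurable M \<and> integrable M (\<lambda>x. (f x)\<^sup>2)}"

definition abs_cont_fun :: "(real \<Rightarrow> real) \<Rightarrow> bool" where
  "abs_cont_fun g \<longleftrightarrow> (\<forall>e>0. \<exists>d>0. \<forall>n (a::nat \<Rightarrow> real) (b::nat \<Rightarrow> real).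
      (\<forall>i<n. a i \<le> b i) \<and>
      (\<forall>i<n. \<forall>j<n. i \<noteq> j \<longrightarrow> {a i<..<b i} \<inter> {a j<..<b j} = {}) \<and>
      (\<Sum>i<n. b i - a i) < d
      \<longrightarrow> (\<Sum>i<n. \<bar>g (b i) - g (a i)\<bar>) < e)"

definition scanning_family :: "'a measure \<Rightarrow> (real \<Rightarrow> 'a set) \<Rightarrow> bool" where
  "scanning_family H A \<longleftrightarrow>
     (\<forall>z. A z \<in> sets H) \<and> mono A \<and>
     measure H (\<Inter>z. A z) = 0 \<and> measure H (\<Union>z. A z) = 1 \<and>
     strict_mono (\<lambda>z. measure H (A z)) \<and> abs_cont_fun (\<lambda>z. measure H (A z))"

definition outer :: "real ^ 'n \<Rightarrow> real ^ 'n ^ 'n" where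
  "outer v = (\<chi> i j. v $ i * v $ j)"

definition zfun :: "(real \<Rightarrow> 'a set) \<Rightarrow> 'a \<Rightarrow> real" where
  "zfun A x = Inf {z. x \<in> A z}"

definition Cmat :: "'a measure \<Rightarrow> ('a \<Rightarrow> real ^ 'q) \<Rightarrow> (real \<Rightarrow> 'a set) \<Rightarrow> real \<Rightarrow> real ^ 'q ^ 'q" where
  "Cmat H mu A z = (LINT y:(- A z)|H. outer (mu y))"

definition Top :: "'a measure \<Rightarrow> ('a \<Rightarrow> real ^ 'q) \<Rightarrow> (real \<Rightarrow> 'a set) \<Rightarrow> ('a \<Rightarrow> real) \<Rightarrow> 'a \<Rightarrow> real" where
  "Top H mu A g x =
     (LINT y:(A (zfun A x))|H. g y *\<^sub>R (mu y v* matrix_inv (Cmat H mu A (zfun A y)))) \<bullet> mu x"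

definition Kop :: "'a measure \<Rightarrow> ('a \<Rightarrow> real ^ 'q) \<Rightarrow> (real \<Rightarrow> 'a set) \<Rightarrow> ('a \<Rightarrow> real) \<Rightarrow> 'a \<Rightarrow> real" where
  "Kop H mu A g x = g x - Top H mu A g x"

definition real_gaussian :: "'w measure \<Rightarrow> ('w \<Rightarrow> real) \<Rightarrow> real \<Rightarrow> real \<Rightarrow> bool" where
  "real_gaussian M X m v \<longleftrightarrow> X \<in> borel_measurable M \<and> 0 \<le> v \<and>
     distr M borel X = (if v = 0 then return borel m else density lborel (normal_density m (sqrt v)))"

definition centered_gaussian_process ::
  "'w measure \<Rightarrow> 'i set \<Rightarrow> ('i \<Rightarrow> 'w \<Rightarrow> real) \<Rightarrow> ('i \<Rightarrow> 'i \<Rightarrow> real) \<Rightarrow> bool" where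
  "centered_gaussian_process M I X R \<longleftrightarrow>
     (\<forall>t\<in>I. X t \<in> borel_measurable M) \<and>
     (\<forall>J (c::'i \<Rightarrow> real). finite J \<and> J \<subseteq> I \<longrightarrow>
        real_gaussian M (\<lambda>w. \<Sum>t\<in>J. c t * X t w) 0 (\<Sum>s\<in>J. \<Sum>t\<in>J. c s * c t * R s t))"

end

theory Submission
  imports Defs
begin

lemma L2_mult_integrable:
  fixes f g :: "'a \<Rightarrow> real"
  assumes "f \<in> L2 M" "g \<in> L2 M"
  shows "integrable M (\<lambda>x. f x * g x)"
proof (rule Bochner_Integration.integrable_bound[where f="\<lambda>x. (f x)\<^sup>2 + (g x)\<^sup>2"])
  show "integrable M (\<lambda>x. (f x)\<^sup>2 + (g x)\<^sup>2)" using assms by (auto simp: L2_def)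
  show "(\<lambda>x. f x * g x) \<in> borel_measurable M" using assms by (auto simp: L2_def)
  show "AE x in M. norm (f x * g x) \<le> norm ((f x)\<^sup>2 + (g x)\<^sup>2)"
  proof (rule AE_I2)
    fix x
    have "0 \<le> (\<bar>f x\<bar> - \<bar>g x\<bar>)\<^sup>2" by simp
    then have "2 * \<bar>f x\<bar> * \<bar>g x\<bar> \<le> (f x)\<^sup>2 + (g x)\<^sup>2"
      by (simp add: power2_eq_square algebra_simps)
    moreover have "0 \<le> \<bar>f x\<bar> * \<bar>g x\<bar>" by simp
    ultimately have "\<bar>f x\<bar> * \<bar>g x\<bar> \<le> (f x)\<^sup>2 + (g x)\<^sup>2" by linarith
    then show "norm (f x * g x) \<le> norm ((f x)\<^sup>2 + (g x)\<^sup>2)"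
      by (simp add: abs_mult)
  qed
qed

locale scan_setup =
  fixes H :: "(real ^ 'p) measure" and mu :: "real ^ 'p \<Rightarrow> real ^ 'q"
    and A :: "real \<Rightarrow> (real ^ 'p) set"
  assumes Hprob: "prob_space H" and Hsets[measurable_cong]: "sets H = sets borel"
    and mu_L2: "\<And>i. (\<lambda>x. mu x $ i) \<in> L2 H"
    and scan: "scanning_family H A"
    and C_nonsing: "\<And>z. invertible (Cmat H mu A z)"
begin

sublocale prob_space H by (rule Hprob)

lemma space_H[simp]: "space H = UNIV"
  using sets_eq_imp_space_eq[OF Hsets] by simp

lemma compl_sets'[measurable]: "S \<in> sets H \<Longrightarrow> - S \<in> sets H"
  using sets.compl_sets[of S H] by (simp add: Compl_eq_Diff_UNIV)

lemma A_sets[measurable]: "A t \<in> sets H"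
  using scan by (simp add: scanning_family_def)

lemma A_mono: "s \<le> t \<Longrightarrow> A s \<subseteq> A t"
  using scan by (simp add: scanning_family_def mono_def)

definition "Ainf = (\<Inter>z. A z)"
definition "Asup = (\<Union>z. A z)"
definition "G = Asup - Ainf"

lemma Ainf_eq: "Ainf = (\<Inter>n::nat. A (- real n))"
proof -
  have *: "x \<in> A z" if "\<forall>n::nat. x \<in> A (- real n)" for x z
  proof -
    obtain n :: nat where n: "- z \<le> real n" using real_arch_simple[of "- z"] by (elim exE) simp
    have "x \<in> A (- real n)" using that by simp
    moreover have "A (- real n) \<subseteq> A z" using n by (intro A_mono) simp
    ultimately show ?thesis by (rule subsetD[rotated])
  qed
  show ?thesis unfolding Ainf_def
  proof (intro set_eqI iffI)
    fix x assume "x \<in> (\<Inter>z. A z)" then show "x \<in> (\<Inter>n::nat. A (- real n))" by simp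
  next
    fix x assume "x \<in> (\<Inter>n::nat. A (- real n))" then show "x \<in> (\<Inter>z. A z)" using * by simp
  qed
qed

lemma Asup_eq: "Asup = (\<Union>n::nat. A (real n))"
proof -
  have *: "\<exists>n::nat. x \<in> A (real n)" if "x \<in> A z" for x z
  proof -
    obtain n :: nat where n: "z \<le> real n" using real_arch_simple[of z] by (elim exE) simp
    have "A z \<subseteq> A (real n)" using n by (intro A_mono) simp
    then show ?thesis using that by blast
  qed
  show ?thesis unfolding Asup_def
  proof (intro set_eqI iffI)
    fix x assume "x \<in> (\<Union>z. A z)" then show "x \<in> (\<Union>n::nat. A (real n))" using * by fast
  next
    fix x assume "x \<in> (\<Union>n::nat. A (real n))" then show "x \<in> (\<Union>z. A z)" by fast
  qed
qed

lemma Ainf_sets[measurable]: "Ainf \<in> sets H" and Asup_sets[measurable]: "Asup \<in> sets H"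
  and G_sets[measurable]: "G \<in> sets H"
  unfolding Ainf_eq Asup_eq G_def Ainf_eq Asup_eq by auto

lemma measure_Ainf: "measure H Ainf = 0" and measure_Asup: "measure H Asup = 1"
  using scan by (auto simp: scanning_family_def Ainf_def Asup_def)

lemma AE_G: "AE x in H. x \<in> G"
proof -
  have "AE x in H. x \<in> Asup" by (rule AE_prob_1) (auto simp: measure_Asup)
  moreover have "Ainf \<in> null_sets H"
    using measure_Ainf by (simp add: emeasure_eq_measure null_sets_def)
  then have "AE x in H. x \<notin> Ainf" by (rule AE_not_in)
  ultimately show ?thesis unfolding G_def by eventually_elim auto
qed

lemma zfun_le: assumes "x \<in> G" "x \<in> A t" shows "zfun A x \<le> t"
proof -
  obtain s where s: "x \<notin> A s" using assms(1) by (auto simp: G_def Ainf_def)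
  have "bdd_below {z. x \<in> A z}"
  proof (rule bdd_belowI)
    fix z assume "z \<in> {z. x \<in> A z}"
    then show "s \<le> z" using s A_mono[of z s] by (cases "z \<le> s") auto
  qed
  then show ?thesis unfolding zfun_def using assms(2) by (intro cInf_lower) auto
qed

lemma zfun_less: assumes "x \<in> G" "zfun A x < t" shows "x \<in> A t"
proof -
  have ne: "{z. x \<in> A z} \<noteq> {}" using assms(1) by (auto simp: G_def Asup_def)
  from assms(2) obtain s where "x \<in> A s" "s < t"
    unfolding zfun_def using cInf_less_iff[OF ne] 
    by (metis (no_types, lifting) cInf_lessD mem_Collect_eq ne)
  then show ?thesis using A_mono[of s t] by auto
qed

lemma zfun_notin: "x \<in> G \<Longrightarrow> x \<notin> A t \<Longrightarrow> t \<le> zfun A x"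
  using zfun_less by force

lemma zfun_measurable[measurable]: "zfun A \<in> borel_measurable H"
proof (subst borel_measurable_iff_less, intro allI)
  fix a
  have "{w \<in> space H. zfun A w < a} =
     (G \<inter> (\<Union>n. A (a - 1 / real (Suc n)))) \<union> (if Inf (UNIV::real set) < a then Ainf else {})
       \<union> (if Inf ({}::real set) < a then - Asup else {})" (is "?L = ?R")
  proof (intro set_eqI iffI)
    fix x assume x: "x \<in> ?L"
    show "x \<in> ?R"
    proof (cases "x \<in> G")
      case True
      with x have "zfun A x < a" by simp
      then obtain n where n: "1 / real (Suc n) < a - zfun A x"
        by (metis diff_gt_0_iff_gt inverse_eq_divide reals_Archimedean)
      then have "x \<in> A (a - 1 / real (Suc n))" using True by (intro zfun_less) auto
      then show ?thesis using True by auto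
    next
      case False
      then have "x \<in> Ainf \<or> x \<notin> Asup" unfolding G_def by auto
      then show ?thesis
      proof
        assume "x \<in> Ainf"
        then have "{z. x \<in> A z} = UNIV" by (auto simp: Ainf_def)
        then have "zfun A x = Inf UNIV" by (simp add: zfun_def)
        then have "Inf (UNIV::real set) < a" using x by simp
        then have "x \<in> (if Inf (UNIV::real set) < a then Ainf else {})" using \<open>x \<in> Ainf\<close> by simp
        then show ?thesis by blast
      next
        assume "x \<notin> Asup"
        then have "{z. x \<in> A z} = {}" by (auto simp: Asup_def)
        then have "zfun A x = Inf {}" by (simp add: zfun_def)
        then have "Inf ({}::real set) < a" using x by simp
        then have "x \<in> (if Inf ({}::real set) < a then - Asup else {})" using \<open>x \<notin> Asup\<close> by simp
        then show ?thesis by blast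
      qed
    qed
  next
    fix x assume x: "x \<in> ?R"
    have "Ainf \<subseteq> Asup" by (auto simp: Ainf_def Asup_def)
    show "x \<in> ?L"
    proof (cases "x \<in> G")
      case True
      then obtain n where "x \<in> A (a - 1 / real (Suc n))" using x by (auto simp: G_def split: if_splits)
      then have "zfun A x \<le> a - 1 / real (Suc n)" using True zfun_le by blast
      moreover have "0 < 1 / real (Suc n)" by simp
      ultimately have "zfun A x < a" by linarith
      then show ?thesis by simp
    next
      case False
      then have "x \<in> Ainf \<or> x \<notin> Asup" unfolding G_def by auto
      then show ?thesis
      proof
        assume "x \<in> Ainf"
        then have "{z. x \<in> A z} = UNIV" by (auto simp: Ainf_def)
        then have "zfun A x = Inf UNIV" by (simp add: zfun_def)
        moreover have "x \<notin> - Asup" using \<open>x \<in> Ainf\<close> \<open>Ainf \<subseteq> Asup\<close> by blast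
        ultimately have "Inf (UNIV::real set) < a" using x False by (auto split: if_splits)
        then show ?thesis using \<open>zfun A x = Inf UNIV\<close> by simp
      next
        assume "x \<notin> Asup"
        then have "{z. x \<in> A z} = {}" by (auto simp: Asup_def)
        then have "zfun A x = Inf {}" by (simp add: zfun_def)
        moreover have "x \<notin> Ainf" using \<open>x \<notin> Asup\<close> \<open>Ainf \<subseteq> Asup\<close> by blast
        ultimately have "Inf ({}::real set) < a" using x False by (auto split: if_splits)
        then show ?thesis using \<open>zfun A x = Inf {}\<close> by simp
      qed
    qed
  qed
  also have "?R \<in> sets H" using compl_sets' by (intro sets.Un sets.Int) auto
  finally show "{w \<in> space H. zfun A w < a} \<in> sets H" .
qed

lemma h_cont: assumes "0 < e" shows "\<exists>d>0. measure H (A (t + d)) - measure H (A (t - d)) < e"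
proof -
  from scan have "abs_cont_fun (\<lambda>z. measure H (A z))" by (simp add: scanning_family_def)
  then have Hc: "\<forall>e>0. \<exists>d>0. \<forall>n (a::nat \<Rightarrow> real) (b::nat \<Rightarrow> real).
      (\<forall>i<n. a i \<le> b i) \<and>
      (\<forall>i<n. \<forall>j<n. i \<noteq> j \<longrightarrow> {a i<..<b i} \<inter> {a j<..<b j} = {}) \<and>
      (\<Sum>i<n. b i - a i) < d
      \<longrightarrow> (\<Sum>i<n. \<bar>measure H (A (b i)) - measure H (A (a i))\<bar>) < e"
    by (simp only: abs_cont_fun_def)
  obtain d where d: "d > 0" and D: "\<forall>n (a::nat \<Rightarrow> real) (b::nat \<Rightarrow> real).
      (\<forall>i<n. a i \<le> b i) \<and>
      (\<forall>i<n. \<forall>j<n. i \<noteq> j \<longrightarrow> {a i<..<b i} \<inter> {a j<..<b j} = {}) \<and>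
      (\<Sum>i<n. b i - a i) < d
      \<longrightarrow> (\<Sum>i<n. \<bar>measure H (A (b i)) - measure H (A (a i))\<bar>) < e"
    using Hc[rule_format, OF assms] by (elim exE conjE) 
  have "\<bar>measure H (A (t + d/4)) - measure H (A (t - d/4))\<bar> < e"
    using D[rule_format, of 1 "\<lambda>_. t - d/4" "\<lambda>_. t + d/4"] d by simp
  then have "measure H (A (t + d/4)) - measure H (A (t - d/4)) < e" by simp
  moreover have "d/4 > 0" using d by simp
  ultimately show ?thesis by blast
qed

lemma ties: "AE y in H. zfun A y \<noteq> t"
proof -
  let ?S = "{y \<in> G. zfun A y = t}"
  have "?S = G \<inter> (zfun A -` {t} \<inter> space H)" by auto
  also have "\<dots> \<in> sets H"
    by (intro sets.Int G_sets measurable_sets[OF zfun_measurable]) simp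
  finally have S: "?S \<in> sets H" .
  have Se: "measure H ?S \<le> e" if "e > 0" for e
  proof -
    obtain d where d: "d > 0" "measure H (A (t + d)) - measure H (A (t - d)) < e"
      using h_cont[OF \<open>e > 0\<close>] by blast
    have sub: "?S \<subseteq> A (t + d) - A (t - d)"
    proof
      fix y assume y: "y \<in> ?S"
      then have yG: "y \<in> G" and yt: "zfun A y = t" by auto
      have "y \<in> A (t + d)" using d yG yt by (intro zfun_less) auto
      moreover have "y \<notin> A (t - d)"
      proof
        assume "y \<in> A (t - d)"
        then have "zfun A y \<le> t - d" using zfun_le[OF yG] by blast
        then show False using yt d by simp
      qed
      ultimately show "y \<in> A (t + d) - A (t - d)" by simp
    qed
    have "measure H ?S \<le> measure H (A (t + d) - A (t - d))"
      by (rule finite_measure_mono[OF sub]) (intro sets.Diff A_sets)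
    also have "\<dots> = measure H (A (t + d)) - measure H (A (t - d))"
      using A_mono[of "t - d" "t + d"] d by (intro finite_measure_Diff A_sets) simp
    finally show ?thesis using d by simp
  qed
  have "measure H ?S \<le> 0 + e" if "e > 0" for e using Se[OF that] by simp
  then have "measure H ?S \<le> 0" by (rule field_le_epsilon)
  then have "measure H ?S = 0" by (simp add: measure_nonneg antisym)
  then have "?S \<in> null_sets H" using S by (simp add: emeasure_eq_measure null_sets_def)
  then have "AE y in H. y \<notin> ?S" by (rule AE_not_in)
  then show ?thesis using AE_G by eventually_elim auto
qed

lemma AE_in_A: "AE y in H. (y \<in> A t) = (zfun A y \<le> t)"
  using AE_G ties[of t]
proof eventually_elim
  case (elim y)
  have "y \<in> A t \<Longrightarrow> zfun A y \<le> t" by (rule zfun_le[OF elim(1)])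
  moreover have "zfun A y \<le> t \<Longrightarrow> y \<in> A t" using elim(2) by (intro zfun_less[OF elim(1)]) (simp add: less_le)
  ultimately show ?case by blast
qed

lemma AE_notin_A: "AE y in H. (y \<notin> A t) = (t \<le> zfun A y)"
  using AE_G ties[of t]
proof eventually_elim
  case (elim y)
  have "y \<in> A t \<Longrightarrow> zfun A y \<le> t" by (rule zfun_le[OF elim(1)])
  moreover have "zfun A y < t \<Longrightarrow> y \<in> A t" by (rule zfun_less[OF elim(1)])
  ultimately show ?case using elim(2) by (cases "zfun A y < t") (auto simp: not_less)
qed

end

lemma borel_measurable_vec_nth': "(\<lambda>x::'b::euclidean_space^'n. x $ i) \<in> borel_measurable borel"
  by (intro borel_measurable_continuous_onI continuous_intros)

lemma measurable_vec_iff: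
  "(f::'a \<Rightarrow> 'b::euclidean_space^'n) \<in> borel_measurable M \<longleftrightarrow> (\<forall>i. (\<lambda>x. f x $ i) \<in> borel_measurable M)"
proof
  assume "f \<in> borel_measurable M"
  then show "\<forall>i. (\<lambda>x. f x $ i) \<in> borel_measurable M"
    by (intro allI measurable_compose[OF _ borel_measurable_vec_nth'])
next
  assume *: "\<forall>i. (\<lambda>x. f x $ i) \<in> borel_measurable M"
  show "f \<in> borel_measurable M"
  proof (subst borel_measurable_euclidean_space, intro ballI)
    fix b :: "'b^'n" assume "b \<in> Basis"
    then obtain i u where "b = axis i u" "u \<in> Basis" by (auto simp: Basis_vec_def)
    then show "(\<lambda>x. f x \<bullet> b) \<in> borel_measurable M"
      using * by (auto simp: inner_axis intro!: borel_measurable_inner)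
  qed
qed

lemma integrable_vec:
  fixes f :: "'a \<Rightarrow> 'b::euclidean_space^'n"
  assumes "\<And>i. integrable M (\<lambda>x. f x $ i)"
  shows "integrable M f"
proof -
  have "integrable M (\<lambda>x. f x \<bullet> b)" if "b \<in> Basis" for b
  proof -
    from that obtain i u where "b = axis i u" "u \<in> Basis" by (auto simp: Basis_vec_def)
    then show ?thesis using assms[of i] by (simp add: inner_axis)
  qed
  then have "integrable M (\<lambda>x. \<Sum>b\<in>Basis. (f x \<bullet> b) *\<^sub>R b)"
    by (intro Bochner_Integration.integrable_sum integrable_scaleR_left) auto
  then show ?thesis by (simp add: euclidean_representation)
qed

lemma integral_vec_nth:
  fixes f :: "'a \<Rightarrow> 'b::euclidean_space^'n"
  assumes "integrable M f"
  shows "(integral\<^sup>L M f) $ i = (\<integral>x. f x $ i \<partial>M)"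
  using integral_bounded_linear[OF bounded_linear_vec_nth assms, of i] by simp

lemma integrable_vec_nth:
  fixes f :: "'a \<Rightarrow> 'b::euclidean_space^'n"
  assumes "integrable M f"
  shows "integrable M (\<lambda>x. f x $ i)"
  using integrable_bounded_linear[OF bounded_linear_vec_nth assms] by simp

lemma real_Cauchy_Schwarz_int:
  fixes f g :: "'a \<Rightarrow> real"
  assumes "f \<in> L2 M" "g \<in> L2 M"
  shows "(\<integral>x. f x * g x \<partial>M)\<^sup>2 \<le> (\<integral>x. (f x)\<^sup>2 \<partial>M) * (\<integral>x. (g x)\<^sup>2 \<partial>M)"
proof -
  let ?A = "\<integral>x. (f x)\<^sup>2 \<partial>M" and ?B = "\<integral>x. (g x)\<^sup>2 \<partial>M" and ?X = "\<integral>x. f x * g x \<partial>M"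
  have i1: "integrable M (\<lambda>x. (f x)\<^sup>2)" "integrable M (\<lambda>x. (g x)\<^sup>2)" using assms by (auto simp: L2_def)
  have i2: "integrable M (\<lambda>x. f x * g x)" using assms by (rule L2_mult_integrable)
  have key: "0 \<le> ?A - 2 * s * ?X + s\<^sup>2 * ?B" for s
  proof -
    have "0 \<le> (\<integral>x. (f x - s * g x)\<^sup>2 \<partial>M)" by simp
    also have "(\<integral>x. (f x - s * g x)\<^sup>2 \<partial>M) = (\<integral>x. (f x)\<^sup>2 - 2 * s * (f x * g x) + s\<^sup>2 * (g x)\<^sup>2 \<partial>M)"
      by (rule Bochner_Integration.integral_cong) (auto simp: power2_eq_square algebra_simps)
    also have "\<dots> = ?A - 2 * s * ?X + s\<^sup>2 * ?B"
      using i1 i2 by simp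
    finally show ?thesis .
  qed
  have B0: "0 \<le> ?B" by simp
  show ?thesis
  proof (cases "?B = 0")
    case True
    have "?X = 0"
    proof (rule ccontr)
      assume "?X \<noteq> 0"
      have "0 \<le> ?A - 2 * ((?A + 1) / (2 * ?X)) * ?X" using key[of "(?A + 1) / (2 * ?X)"] True by simp
      also have "\<dots> = - 1" using \<open>?X \<noteq> 0\<close> by (simp add: field_simps)
      finally show False by simp
    qed
    then show ?thesis using True by simp
  next
    case False
    then have Bp: "0 < ?B" using B0 by linarith
    have "0 \<le> ?A - 2 * (?X / ?B) * ?X + (?X / ?B)\<^sup>2 * ?B" using key[of "?X / ?B"] .
    also have "\<dots> = ?A - ?X\<^sup>2 / ?B" using Bp by (simp add: field_simps power2_eq_square)
    finally have "?X\<^sup>2 / ?B \<le> ?A" by simp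
    then show ?thesis using Bp by (simp add: field_simps mult.commute)
  qed
qed

lemma my_prod_integrable:
  fixes P Q :: "'a \<Rightarrow> real"
  assumes M1: "sigma_finite_measure M1" and M2: "sigma_finite_measure M2"
    and P: "integrable M1 P" and Q: "integrable M2 Q"
  shows "integrable (M1 \<Otimes>\<^sub>M M2) (\<lambda>z. P (fst z) * Q (snd z))"
proof -
  interpret pair_sigma_finite M1 M2 using M1 M2 by (simp add: pair_sigma_finite_def)
  show ?thesis
  proof (rule Fubini_integrable)
    show "(\<lambda>z. P (fst z) * Q (snd z)) \<in> borel_measurable (M1 \<Otimes>\<^sub>M M2)"
      using P Q by measurable
    have "(\<lambda>x. \<integral>y. norm (P (fst (x, y)) * Q (snd (x, y))) \<partial>M2) = (\<lambda>x. \<bar>P x\<bar> * (\<integral>y. \<bar>Q y\<bar> \<partial>M2))"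
      by (simp add: abs_mult)
    moreover have "integrable M1 (\<lambda>x. \<bar>P x\<bar> * (\<integral>y. \<bar>Q y\<bar> \<partial>M2))" using P by simp
    ultimately show "integrable M1 (\<lambda>x. \<integral>y. norm (P (fst (x, y)) * Q (snd (x, y))) \<partial>M2)" by simp
    show "AE x in M1. integrable M2 (\<lambda>y. P (fst (x, y)) * Q (snd (x, y)))" using Q by simp
  qed
qed

context scan_setup
begin

lemma mu_i_meas[measurable]: "(\<lambda>x. mu x $ i) \<in> borel_measurable H"
  using mu_L2[of i] by (simp add: L2_def)

lemma mu_meas[measurable]: "mu \<in> borel_measurable H"
  using mu_i_meas measurable_vec_iff by blast

lemma mu_prod_int: "integrable H (\<lambda>x. mu x $ i * mu x $ j)"
  by (rule L2_mult_integrable[OF mu_L2 mu_L2])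

lemma norm_mu_sq: "(norm (mu x))\<^sup>2 = (\<Sum>i\<in>UNIV. mu x $ i * mu x $ i)"
  by (simp add: power2_norm_eq_inner inner_vec_def)

lemma norm_mu_sq_int: "integrable H (\<lambda>x. (norm (mu x))\<^sup>2)"
  unfolding norm_mu_sq by (intro Bochner_Integration.integrable_sum mu_prod_int)

lemma g_mu_int: assumes "g \<in> L2 H" shows "integrable H (\<lambda>x. g x * norm (mu x))"
proof (rule Bochner_Integration.integrable_bound[where f="\<lambda>x. (g x)\<^sup>2 + (norm (mu x))\<^sup>2"])
  show "integrable H (\<lambda>x. (g x)\<^sup>2 + (norm (mu x))\<^sup>2)" using assms norm_mu_sq_int by (auto simp: L2_def)
  show "(\<lambda>x. g x * norm (mu x)) \<in> borel_measurable H" using assms by (auto simp: L2_def)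
  show "AE x in H. norm (g x * norm (mu x)) \<le> norm ((g x)\<^sup>2 + (norm (mu x))\<^sup>2)"
  proof (rule AE_I2)
    fix x
    have "0 \<le> (\<bar>g x\<bar> - norm (mu x))\<^sup>2" by simp
    then have "2 * \<bar>g x\<bar> * norm (mu x) \<le> (g x)\<^sup>2 + (norm (mu x))\<^sup>2"
      by (simp add: power2_eq_square algebra_simps)
    moreover have "0 \<le> \<bar>g x\<bar> * norm (mu x)" by simp
    ultimately have "\<bar>g x\<bar> * norm (mu x) \<le> (g x)\<^sup>2 + (norm (mu x))\<^sup>2" by linarith
    then show "norm (g x * norm (mu x)) \<le> norm ((g x)\<^sup>2 + (norm (mu x))\<^sup>2)"
      by (simp add: abs_mult)
  qed
qed

lemma integrable_if:
  fixes f :: "_ \<Rightarrow> real"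
  assumes "integrable H f" "{y. P y} \<in> sets H"
  shows "integrable H (\<lambda>y. if P y then f y else 0)"
proof -
  have "integrable H (\<lambda>y. indicator {y. P y} y * f y)"
    using integrable_real_mult_indicator[OF assms(2) assms(1)] by (simp add: mult.commute)
  moreover have "(\<lambda>y. indicator {y. P y} y * f y) = (\<lambda>y. if P y then f y else 0)"
    by (auto simp: indicator_def)
  ultimately show ?thesis by simp
qed

lemma zle_sets[measurable]: "{y. t \<le> zfun A y} \<in> sets H" "{y. zfun A y \<le> t} \<in> sets H"
  "{y. zfun A y < t} \<in> sets H" "{y. t < zfun A y} \<in> sets H"
  using zfun_measurable by (auto intro: measurable_sets_borel[where M=H, simplified])

end

lemma det_meas:
  fixes M :: "'a \<Rightarrow> real^'n^'n"
  assumes "\<And>i j. (\<lambda>y. M y $ i $ j) \<in> borel_measurable N"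
  shows "(\<lambda>y. det (M y)) \<in> borel_measurable N"
  unfolding det_def using assms by measurable

lemma mv_scaleR: "(C::real^'n^'m) *v (c *\<^sub>R u) = c *\<^sub>R (C *v u)"
  by (simp add: vec_eq_iff matrix_vector_mult_def sum_distrib_left algebra_simps)

context scan_setup
begin

abbreviation "C t \<equiv> Cmat H mu A t"

lemma C_integrable: assumes S: "S \<in> sets H" shows "integrable H (\<lambda>y. indicator S y *\<^sub>R outer (mu y))"
proof (rule integrable_vec)
  fix i show "integrable H (\<lambda>x. (indicator S x *\<^sub>R outer (mu x)) $ i)"
  proof (rule integrable_vec)
    fix j
    have "integrable H (\<lambda>x. mu x $ i * mu x $ j * indicator S x)"
      using integrable_real_mult_indicator[OF S mu_prod_int] .
    then show "integrable H (\<lambda>x. (indicator S x *\<^sub>R outer (mu x)) $ i $ j)"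
      by (simp add: outer_def mult.commute)
  qed
qed

lemma C_entry: "C t $ i $ j = (\<integral>y. (if t \<le> zfun A y then mu y $ i * mu y $ j else 0) \<partial>H)"
proof -
  have S: "- A t \<in> sets H" by simp
  have "C t $ i $ j = (\<integral>y. indicator (- A t) y * (mu y $ i * mu y $ j) \<partial>H)"
    unfolding Cmat_def set_lebesgue_integral_def
    using integral_vec_nth[OF C_integrable[OF S]] integral_vec_nth[OF integrable_vec_nth[OF C_integrable[OF S]]]
    by (simp add: outer_def)
  also have "\<dots> = (\<integral>y. (if t \<le> zfun A y then mu y $ i * mu y $ j else 0) \<partial>H)"
  proof (rule integral_cong_AE)
    show "(\<lambda>y. indicator (- A t) y * (mu y $ i * mu y $ j)) \<in> borel_measurable H" by measurable
    show "(\<lambda>y. if t \<le> zfun A y then mu y $ i * mu y $ j else 0) \<in> borel_measurable H" by measurable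
    show "AE y in H. indicator (- A t) y * (mu y $ i * mu y $ j) = (if t \<le> zfun A y then mu y $ i * mu y $ j else 0)"
      using AE_notin_A[of t] by eventually_elim (auto simp: indicator_def)
  qed
  finally show ?thesis .
qed

lemma C_entry_sym: "C t $ i $ j = C t $ j $ i"
  unfolding C_entry by (intro Bochner_Integration.integral_cong refl) (simp add: mult.commute)

lemma C_sym: "transpose (C t) = C t"
  by (simp add: vec_eq_iff transpose_def C_entry_sym[of t _ _])

lemma int_if_prod: "integrable H (\<lambda>y. if t \<le> zfun A y then mu y $ i * mu y $ j * c else 0)"
  by (intro integrable_if integrable_mult_left mu_prod_int) simp

lemma inner_mu: "mu y \<bullet> w = (\<Sum>j\<in>UNIV. mu y $ j * w $ j)"
  by (simp add: inner_vec_def)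

lemma C_mulv: "(C t *v w) $ i = (\<integral>y. (if t \<le> zfun A y then mu y $ i * (mu y \<bullet> w) else 0) \<partial>H)"
proof -
  have "(C t *v w) $ i = (\<Sum>j\<in>UNIV. C t $ i $ j * w $ j)"
    by (simp add: matrix_vector_mult_def)
  also have "\<dots> = (\<Sum>j\<in>UNIV. (\<integral>y. (if t \<le> zfun A y then mu y $ i * mu y $ j * w $ j else 0) \<partial>H))"
    unfolding C_entry
    by (intro sum.cong refl, subst integral_mult_left_zero[symmetric], intro Bochner_Integration.integral_cong refl) auto
  also have "\<dots> = (\<integral>y. (\<Sum>j\<in>UNIV. (if t \<le> zfun A y then mu y $ i * mu y $ j * w $ j else 0)) \<partial>H)"
    by (rule Bochner_Integration.integral_sum[symmetric]) (rule int_if_prod)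
  also have "\<dots> = (\<integral>y. (if t \<le> zfun A y then mu y $ i * (mu y \<bullet> w) else 0) \<partial>H)"
    by (rule Bochner_Integration.integral_cong) (auto simp: inner_mu sum_distrib_left mult.assoc)
  finally show ?thesis .
qed

lemma int_if_quad: "integrable H (\<lambda>y. if t \<le> zfun A y then (mu y \<bullet> w)\<^sup>2 else 0)"
proof -
  have "(\<lambda>y. (mu y \<bullet> w)\<^sup>2) = (\<lambda>y. \<Sum>i\<in>UNIV. \<Sum>j\<in>UNIV. mu y $ i * mu y $ j * (w $ i * w $ j))"
    by (simp add: inner_mu power2_eq_square sum_product algebra_simps)
  moreover have "integrable H (\<lambda>y. \<Sum>i\<in>UNIV. \<Sum>j\<in>UNIV. mu y $ i * mu y $ j * (w $ i * w $ j))"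
    by (intro Bochner_Integration.integrable_sum integrable_mult_left mu_prod_int)
  ultimately have "integrable H (\<lambda>y. (mu y \<bullet> w)\<^sup>2)" by simp
  then show ?thesis by (intro integrable_if) simp_all
qed

lemma int_mw: "integrable H (\<lambda>y. mu y $ i * (mu y \<bullet> w))"
proof -
  have "(\<lambda>y. mu y $ i * (mu y \<bullet> w)) = (\<lambda>y. \<Sum>j\<in>UNIV. mu y $ i * mu y $ j * w $ j)"
    by (simp add: inner_mu sum_distrib_left mult.assoc)
  moreover have "integrable H (\<lambda>y. \<Sum>j\<in>UNIV. mu y $ i * mu y $ j * w $ j)"
    by (intro Bochner_Integration.integrable_sum integrable_mult_left mu_prod_int)
  ultimately show ?thesis by simp
qed

lemma C_quad: "w \<bullet> (C t *v w) = (\<integral>y. (if t \<le> zfun A y then (mu y \<bullet> w)\<^sup>2 else 0) \<partial>H)"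
proof -
  have "w \<bullet> (C t *v w) = (\<Sum>i\<in>UNIV. w $ i * (C t *v w) $ i)"
    by (simp add: inner_vec_def)
  also have "\<dots> = (\<Sum>i\<in>UNIV. (\<integral>y. (if t \<le> zfun A y then w $ i * (mu y $ i * (mu y \<bullet> w)) else 0) \<partial>H))"
    unfolding C_mulv
    by (intro sum.cong refl, subst integral_mult_right_zero[symmetric], intro Bochner_Integration.integral_cong refl) auto
  also have "\<dots> = (\<integral>y. (\<Sum>i\<in>UNIV. (if t \<le> zfun A y then w $ i * (mu y $ i * (mu y \<bullet> w)) else 0)) \<partial>H)"
    by (rule Bochner_Integration.integral_sum[symmetric]) (intro integrable_if integrable_mult_right int_mw, simp)
  also have "\<dots> = (\<integral>y. (if t \<le> zfun A y then (mu y \<bullet> w)\<^sup>2 else 0) \<partial>H)"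
    by (rule Bochner_Integration.integral_cong)
       (auto simp: inner_mu power2_eq_square sum_distrib_right algebra_simps)
  finally show ?thesis .
qed

lemma C_quad_nonneg: "0 \<le> w \<bullet> (C t *v w)"
  unfolding C_quad by (rule integral_nonneg_AE) auto

lemma C_quad_mono: assumes "s \<le> t" shows "w \<bullet> (C t *v w) \<le> w \<bullet> (C s *v w)"
  unfolding C_quad
  by (rule integral_mono[OF int_if_quad int_if_quad]) (use assms in auto)

lemma C_inv: "C t ** matrix_inv (C t) = mat 1 \<and> matrix_inv (C t) ** C t = mat 1"
  using C_nonsing[of t] unfolding invertible_def matrix_inv_def by (rule someI_ex)

lemma Kid: "C t *v (w v* matrix_inv (C t)) = w"
proof -
  have "C t *v (w v* matrix_inv (C t)) = transpose (C t) *v (w v* matrix_inv (C t))"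
    by (simp add: C_sym)
  also have "\<dots> = (w v* matrix_inv (C t)) v* C t" by simp
  also have "\<dots> = w v* (matrix_inv (C t) ** C t)" by (simp add: vector_matrix_mul_assoc)
  also have "\<dots> = w" using C_inv by simp
  finally show ?thesis .
qed

lemma C_inj: "C t *v v = 0 \<Longrightarrow> v = 0"
  using inj_matrix_vector_mult[OF C_nonsing[of t]] by (metis injD matrix_vector_mult_0_right)

lemma C_pos: "\<exists>lam>0. \<forall>v. lam * (norm v)\<^sup>2 \<le> v \<bullet> (C z0 *v v)"
proof -
  let ?q = "\<lambda>v. v \<bullet> (C z0 *v v)"
  have cont: "continuous_on (sphere (0::real^'q) 1) ?q"
    by (intro continuous_intros linear_continuous_on matrix_vector_mul_bounded_linear)
  have ne: "sphere (0::real^'q) 1 \<noteq> {}" by simp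
  obtain v0 where v0: "v0 \<in> sphere 0 1" and min: "\<And>v. v \<in> sphere 0 1 \<Longrightarrow> ?q v0 \<le> ?q v"
    using continuous_attains_inf[OF compact_sphere ne cont] by blast
  have "?q v0 \<noteq> 0"
  proof
    assume q0: "?q v0 = 0"
    have "AE y in H. (if z0 \<le> zfun A y then (mu y \<bullet> v0)\<^sup>2 else 0) = 0"
      using q0 unfolding C_quad by (subst (asm) integral_nonneg_eq_0_iff_AE[OF int_if_quad]) auto
    then have AE0: "AE y in H. (if z0 \<le> zfun A y then mu y $ i * (mu y \<bullet> v0) else 0) = 0" for i
      by eventually_elim (auto split: if_splits)
    have "(C z0 *v v0) $ i = 0" for i
      unfolding C_mulv using integral_cong_AE[OF _ _ AE0[of i]] by simp
    then have "C z0 *v v0 = 0" by (simp add: vec_eq_iff)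
    then have "v0 = 0" by (rule C_inj)
    then show False using v0 by simp
  qed
  then have pos: "0 < ?q v0" using C_quad_nonneg[of v0 z0] by simp
  have "?q v0 * (norm v)\<^sup>2 \<le> ?q v" for v
  proof (cases "v = 0")
    case True then show ?thesis by simp
  next
    case False
    define u where "u = (1 / norm v) *\<^sub>R v"
    have u: "u \<in> sphere 0 1" using False by (simp add: u_def)
    have vu: "v = norm v *\<^sub>R u" using False by (simp add: u_def)
    have e: "?q (norm v *\<^sub>R u) = (norm v)\<^sup>2 * ?q u" by (simp add: mv_scaleR power2_eq_square)
    have qv: "?q v = (norm v)\<^sup>2 * ?q u" using e vu by metis
    have "?q v0 * (norm v)\<^sup>2 \<le> ?q u * (norm v)\<^sup>2" by (rule mult_right_mono[OF min[OF u]]) simp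
    then show ?thesis using qv by (simp add: mult.commute)
  qed
  then show ?thesis using pos by blast
qed

lemma Phi_bound:
  assumes lam: "0 < lam" "\<And>v. lam * (norm v)\<^sup>2 \<le> v \<bullet> (C z0 *v v)" and t: "t \<le> z0"
  shows "lam * norm (w v* matrix_inv (C t)) \<le> norm w"
proof -
  let ?u = "w v* matrix_inv (C t)"
  have "lam * (norm ?u)\<^sup>2 \<le> ?u \<bullet> (C z0 *v ?u)" by (rule lam(2))
  also have "\<dots> \<le> ?u \<bullet> (C t *v ?u)" by (rule C_quad_mono[OF t])
  also have "\<dots> = ?u \<bullet> w" by (simp add: Kid)
  also have "\<dots> \<le> norm ?u * norm w" by (rule norm_cauchy_schwarz)
  finally have *: "lam * (norm ?u)\<^sup>2 \<le> norm ?u * norm w" .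
  show ?thesis
  proof (cases "norm ?u = 0")
    case True then show ?thesis by simp
  next
    case False
    then have "0 < norm ?u" by simp
    with * show ?thesis by (simp add: power2_eq_square)
  qed
qed

lemma Phi_cramer: "w v* matrix_inv (C t) = (\<chi> k. det (\<chi> i j. if j = k then w $ i else C t $ i $ j) / det (C t))"
proof -
  have "det (C t) \<noteq> 0" using C_nonsing[of t] by (simp add: invertible_det_nz)
  from cramer[OF this] Kid show ?thesis by blast
qed

lemma C_entry_meas[measurable]: "(\<lambda>t. C t $ i $ j) \<in> borel_measurable borel"
proof -
  have m1[measurable]: "(\<lambda>p. zfun A (snd p)) \<in> borel_measurable (borel \<Otimes>\<^sub>M H)"
    by (rule measurable_compose[OF measurable_snd zfun_measurable])
  have m2[measurable]: "(\<lambda>p. mu (snd p) $ i * mu (snd p) $ j) \<in> borel_measurable (borel \<Otimes>\<^sub>M H)"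
    by (rule measurable_compose[OF measurable_snd mu_prod_int[THEN borel_measurable_integrable]])
  have "(\<lambda>p. if fst p \<le> zfun A (snd p) then mu (snd p) $ i * mu (snd p) $ j else 0) \<in> borel_measurable (borel \<Otimes>\<^sub>M H)"
    by measurable
  then have "(\<lambda>t. \<integral>y. (if t \<le> zfun A y then mu y $ i * mu y $ j else 0) \<partial>H) \<in> borel_measurable borel"
    by (intro borel_measurable_lebesgue_integral) (simp add: case_prod_beta')
  then show ?thesis by (simp add: C_entry)
qed

lemma Cz_entry_meas[measurable]: "(\<lambda>y. C (zfun A y) $ i $ j) \<in> borel_measurable H"
  by (rule measurable_compose[OF zfun_measurable C_entry_meas])

lemma Phi_meas[measurable]: "(\<lambda>y. mu y v* matrix_inv (C (zfun A y))) \<in> borel_measurable H"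
proof -
  have "(\<lambda>y. (\<chi> k. det (\<chi> i j. if j = k then mu y $ i else C (zfun A y) $ i $ j) / det (C (zfun A y))))
      \<in> borel_measurable H"
  proof (subst measurable_vec_iff, intro allI)
    fix k
    have "(\<lambda>y. det (\<chi> i j. if j = k then mu y $ i else C (zfun A y) $ i $ j)) \<in> borel_measurable H"
      by (rule det_meas) simp
    moreover have "(\<lambda>y. det (C (zfun A y))) \<in> borel_measurable H"
      by (rule det_meas) simp
    ultimately show "(\<lambda>y. (\<chi> k. det (\<chi> i j. if j = k then mu y $ i else C (zfun A y) $ i $ j) / det (C (zfun A y))) $ k)
      \<in> borel_measurable H" by simp
  qed
  then show ?thesis by (simp add: Phi_cramer)
qed

end

context scan_setup
begin

definition "Phi y = mu y v* matrix_inv (C (zfun A y))"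
definition "trunc g t = (\<lambda>y. if zfun A y \<le> t then g y else 0)"
definition "aa g t = (\<integral>y. trunc g t y *\<^sub>R Phi y \<partial>H)"

lemma Phi_meas'[measurable]: "Phi \<in> borel_measurable H"
  unfolding Phi_def by (rule Phi_meas)

lemma Kid': "C (zfun A y) *v Phi y = mu y"
  unfolding Phi_def by (rule Kid)

lemma L2_meas: "g \<in> L2 H \<Longrightarrow> g \<in> borel_measurable H"
  by (simp add: L2_def)

lemma trunc_L2: assumes "g \<in> L2 H" shows "trunc g t \<in> L2 H"
proof -
  have m: "g \<in> borel_measurable H" using assms by (simp add: L2_def)
  have tm: "trunc g t \<in> borel_measurable H" unfolding trunc_def using m by measurable
  have "integrable H (\<lambda>y. (trunc g t y)\<^sup>2)"
  proof (rule Bochner_Integration.integrable_bound[where f="\<lambda>y. (g y)\<^sup>2"])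
    show "integrable H (\<lambda>y. (g y)\<^sup>2)" using assms by (simp add: L2_def)
    show "(\<lambda>y. (trunc g t y)\<^sup>2) \<in> borel_measurable H" using tm by measurable
    show "AE x in H. norm ((trunc g t x)\<^sup>2) \<le> norm ((g x)\<^sup>2)" by (auto simp: trunc_def)
  qed
  then show ?thesis using tm by (simp add: L2_def)
qed

lemma trunc_lam:
  obtains lam where "lam > 0" "\<And>y. zfun A y \<le> z0 \<Longrightarrow> lam * norm (Phi y) \<le> norm (mu y)"
proof -
  obtain lam where lam: "lam > 0" "\<And>v. lam * (norm v)\<^sup>2 \<le> v \<bullet> (C z0 *v v)"
    using C_pos[of z0] by blast
  show ?thesis
  proof (rule that[OF lam(1)])
    fix y assume "zfun A y \<le> z0"
    then show "lam * norm (Phi y) \<le> norm (mu y)"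
      unfolding Phi_def by (rule Phi_bound[OF lam])
  qed
qed

lemma trunc_bound:
  assumes tr: "\<And>y. g y \<noteq> 0 \<Longrightarrow> zfun A y \<le> z0"
  obtains lam where "lam > 0" "\<And>y. norm (g y *\<^sub>R Phi y) \<le> \<bar>g y\<bar> * norm (mu y) / lam"
proof -
  obtain lam where lam: "lam > 0" "\<And>y. zfun A y \<le> z0 \<Longrightarrow> lam * norm (Phi y) \<le> norm (mu y)"
    using trunc_lam by blast
  show ?thesis
  proof (rule that[OF lam(1)])
    fix y
    show "norm (g y *\<^sub>R Phi y) \<le> \<bar>g y\<bar> * norm (mu y) / lam"
    proof (cases "g y = 0")
      case True then show ?thesis by simp
    next
      case False
      then have "lam * norm (Phi y) \<le> norm (mu y)" using tr lam(2) by blast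
      then have "norm (Phi y) \<le> norm (mu y) / lam" using lam(1) by (simp add: field_simps)
      then have "\<bar>g y\<bar> * norm (Phi y) \<le> \<bar>g y\<bar> * (norm (mu y) / lam)"
        by (intro mult_left_mono) auto
      then show ?thesis by simp
    qed
  qed
qed

lemma g_mu_int': assumes "g \<in> L2 H" shows "integrable H (\<lambda>y. \<bar>g y\<bar> * norm (mu y))"
proof -
  have "integrable H (\<lambda>y. \<bar>g y * norm (mu y)\<bar>)" using g_mu_int[OF assms] by simp
  then show ?thesis by (simp add: abs_mult)
qed

lemma trunc_int:
  assumes g: "g \<in> L2 H" and tr: "\<And>y. g y \<noteq> 0 \<Longrightarrow> zfun A y \<le> z0"
  shows "integrable H (\<lambda>y. g y *\<^sub>R Phi y)"
proof -
  obtain lam where lam: "lam > 0" "\<And>y. norm (g y *\<^sub>R Phi y) \<le> \<bar>g y\<bar> * norm (mu y) / lam"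
    using trunc_bound[OF tr] by blast
  show ?thesis
  proof (rule Bochner_Integration.integrable_bound[where f="\<lambda>y. \<bar>g y\<bar> * norm (mu y) / lam"])
    show "integrable H (\<lambda>y. \<bar>g y\<bar> * norm (mu y) / lam)" using g_mu_int'[OF g] by simp
    show "(\<lambda>y. g y *\<^sub>R Phi y) \<in> borel_measurable H" using L2_meas[OF g] by measurable
    show "AE y in H. norm (g y *\<^sub>R Phi y) \<le> norm (\<bar>g y\<bar> * norm (mu y) / lam)"
      using lam by (intro AE_I2) (auto intro: order_trans)
  qed
qed

lemma trunc_tr: "trunc g t y \<noteq> 0 \<Longrightarrow> zfun A y \<le> t"
  by (auto simp: trunc_def split: if_splits)

lemma aa_int: "g \<in> L2 H \<Longrightarrow> integrable H (\<lambda>y. trunc g t y *\<^sub>R Phi y)"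
  by (rule trunc_int[OF trunc_L2 trunc_tr])

lemma Top_eq: assumes g: "g \<in> L2 H" shows "Top H mu A g x = aa g (zfun A x) \<bullet> mu x"
proof -
  let ?s = "zfun A x"
  have "(LINT y:(A ?s)|H. g y *\<^sub>R (mu y v* matrix_inv (C (zfun A y)))) = aa g ?s"
    unfolding set_lebesgue_integral_def aa_def
  proof (rule integral_cong_AE)
    show "(\<lambda>y. indicat_real (A ?s) y *\<^sub>R g y *\<^sub>R (mu y v* matrix_inv (C (zfun A y)))) \<in> borel_measurable H"
      using L2_meas[OF g] by measurable
    show "(\<lambda>y. trunc g ?s y *\<^sub>R Phi y) \<in> borel_measurable H"
      using L2_meas[OF g] unfolding trunc_def by measurable
    show "AE y in H. indicat_real (A ?s) y *\<^sub>R g y *\<^sub>R (mu y v* matrix_inv (C (zfun A y))) = trunc g ?s y *\<^sub>R Phi y"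
      using AE_in_A[of ?s] by eventually_elim (auto simp: trunc_def Phi_def indicator_def)
  qed
  then show ?thesis unfolding Top_def by simp
qed

lemma aa_norm: assumes g: "g \<in> L2 H" and tr: "\<And>y. g y \<noteq> 0 \<Longrightarrow> zfun A y \<le> z0"
  obtains K where "\<And>t. norm (aa g t) \<le> K"
proof -
  obtain lam where lam: "lam > 0" "\<And>y. norm (g y *\<^sub>R Phi y) \<le> \<bar>g y\<bar> * norm (mu y) / lam"
    using trunc_bound[OF tr] by blast
  have "norm (aa g t) \<le> (\<integral>y. \<bar>g y\<bar> * norm (mu y) / lam \<partial>H)" for t
  proof -
    have "norm (aa g t) \<le> (\<integral>y. norm (trunc g t y *\<^sub>R Phi y) \<partial>H)"
      unfolding aa_def by (rule integral_norm_bound)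
    also have "\<dots> \<le> (\<integral>y. \<bar>g y\<bar> * norm (mu y) / lam \<partial>H)"
    proof (rule integral_mono)
      show "integrable H (\<lambda>y. norm (trunc g t y *\<^sub>R Phi y))" by (rule integrable_norm[OF aa_int[OF g]])
      show "integrable H (\<lambda>y. \<bar>g y\<bar> * norm (mu y) / lam)" using g_mu_int'[OF g] by simp
      fix y show "norm (trunc g t y *\<^sub>R Phi y) \<le> \<bar>g y\<bar> * norm (mu y) / lam"
        using lam(2)[of y] lam(1) by (auto simp: trunc_def)
    qed
    finally show ?thesis .
  qed
  then show ?thesis using that by blast
qed

lemma m_fst_z[measurable]: "(\<lambda>p. zfun A (fst p)) \<in> borel_measurable (H \<Otimes>\<^sub>M H)"
  and m_snd_z[measurable]: "(\<lambda>p. zfun A (snd p)) \<in> borel_measurable (H \<Otimes>\<^sub>M H)"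
  and m_fst_mu[measurable]: "(\<lambda>p. mu (fst p)) \<in> borel_measurable (H \<Otimes>\<^sub>M H)"
  and m_snd_mu[measurable]: "(\<lambda>p. mu (snd p)) \<in> borel_measurable (H \<Otimes>\<^sub>M H)"
  and m_fst_Phi[measurable]: "(\<lambda>p. Phi (fst p)) \<in> borel_measurable (H \<Otimes>\<^sub>M H)"
  and m_snd_Phi[measurable]: "(\<lambda>p. Phi (snd p)) \<in> borel_measurable (H \<Otimes>\<^sub>M H)"
  by (rule measurable_compose[OF measurable_fst zfun_measurable] measurable_compose[OF measurable_snd zfun_measurable]
      measurable_compose[OF measurable_fst mu_meas] measurable_compose[OF measurable_snd mu_meas]
      measurable_compose[OF measurable_fst Phi_meas'] measurable_compose[OF measurable_snd Phi_meas'])+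

lemma m_fst_g: "g \<in> borel_measurable H \<Longrightarrow> (\<lambda>p. g (fst p)) \<in> borel_measurable (H \<Otimes>\<^sub>M H)"
  and m_snd_g: "g \<in> borel_measurable H \<Longrightarrow> (\<lambda>p. g (snd p)) \<in> borel_measurable (H \<Otimes>\<^sub>M H)"
  by (rule measurable_compose[OF measurable_fst] measurable_compose[OF measurable_snd], assumption)+

lemma aa_meas: assumes g: "g \<in> L2 H" shows "(\<lambda>t. aa g t) \<in> borel_measurable borel"
proof -
  have gm: "g \<in> borel_measurable H" using g by (simp add: L2_def)
  have m1[measurable]: "(\<lambda>p. zfun A (snd p)) \<in> borel_measurable (borel \<Otimes>\<^sub>M H)"
    by (rule measurable_compose[OF measurable_snd zfun_measurable])
  have m2[measurable]: "(\<lambda>p. g (snd p) *\<^sub>R Phi (snd p)) \<in> borel_measurable (borel \<Otimes>\<^sub>M H)"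
    by (rule measurable_compose[OF measurable_snd]) (use gm in measurable)
  have "(\<lambda>p. (if zfun A (snd p) \<le> fst p then 1 else 0) *\<^sub>R (g (snd p) *\<^sub>R Phi (snd p))) \<in> borel_measurable (borel \<Otimes>\<^sub>M H)"
    by measurable
  then have "(\<lambda>t. \<integral>y. (if zfun A y \<le> t then 1 else 0) *\<^sub>R (g y *\<^sub>R Phi y) \<partial>H) \<in> borel_measurable borel"
    by (intro borel_measurable_lebesgue_integral) (simp add: case_prod_beta')
  moreover have "(\<lambda>t. \<integral>y. (if zfun A y \<le> t then 1 else 0) *\<^sub>R (g y *\<^sub>R Phi y) \<partial>H) = (\<lambda>t. aa g t)"
    unfolding aa_def trunc_def by (intro ext Bochner_Integration.integral_cong) auto
  ultimately show ?thesis by simp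
qed

lemma Top_meas: assumes g: "g \<in> L2 H" shows "Top H mu A g \<in> borel_measurable H"
proof -
  have "(\<lambda>x. aa g (zfun A x)) \<in> borel_measurable H"
    by (rule measurable_compose[OF zfun_measurable aa_meas[OF g]])
  then have "(\<lambda>x. aa g (zfun A x) \<bullet> mu x) \<in> borel_measurable H" by measurable
  moreover have "Top H mu A g = (\<lambda>x. aa g (zfun A x) \<bullet> mu x)" by (intro ext Top_eq[OF g])
  ultimately show ?thesis by simp
qed

lemma Kop_meas: assumes g: "g \<in> L2 H" shows "Kop H mu A g \<in> borel_measurable H"
  unfolding Kop_def using Top_meas[OF g] L2_meas[OF g] by measurable

end

context scan_setup
begin

lemma pair_sf: "pair_sigma_finite H H"
  unfolding pair_sigma_finite_def by (simp add: sigma_finite_measure_axioms)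

lemma prod_int_HH: "integrable H P \<Longrightarrow> integrable H Q \<Longrightarrow>
  integrable (H \<Otimes>\<^sub>M H) (\<lambda>z. P (fst z) * Q (snd z) :: real)"
  by (rule my_prod_integrable) (simp_all add: sigma_finite_measure_axioms)

lemma inner_le_norms: "\<bar>a \<bullet> b\<bar> \<le> norm a * norm (b::real^'q)"
  by (rule Cauchy_Schwarz_ineq2)

lemma orth_trunc:
  assumes g: "g \<in> L2 H" and tr: "\<And>y. g y \<noteq> 0 \<Longrightarrow> zfun A y \<le> z0"
  shows "(\<integral>x. Top H mu A g x * mu x $ i \<partial>H) = (\<integral>y. g y * mu y $ i \<partial>H)"
proof -
  interpret P: pair_sigma_finite H H by (rule pair_sf)
  obtain lam where lam: "lam > 0" "\<And>y. norm (g y *\<^sub>R Phi y) \<le> \<bar>g y\<bar> * norm (mu y) / lam"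
    using trunc_bound[OF tr] by blast
  have gm[measurable]: "g \<in> borel_measurable H" using g by (simp add: L2_def)
  have [measurable]: "(\<lambda>p. g (snd p)) \<in> borel_measurable (H \<Otimes>\<^sub>M H)" by (rule m_snd_g[OF gm])
  define F where "F x y = (if zfun A y \<le> zfun A x then g y else 0) * (Phi y \<bullet> mu x) * mu x $ i" for x y
  have Fint: "integrable (H \<Otimes>\<^sub>M H) (case_prod F)"
  proof (rule Bochner_Integration.integrable_bound)
    show "integrable (H \<Otimes>\<^sub>M H) (\<lambda>p. (norm (mu (fst p)))\<^sup>2 * (\<bar>g (snd p)\<bar> * norm (mu (snd p)) / lam))"
      by (rule prod_int_HH[OF norm_mu_sq_int]) (use g_mu_int'[OF g] in simp)
    show "case_prod F \<in> borel_measurable (H \<Otimes>\<^sub>M H)"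
      unfolding F_def case_prod_beta' by measurable
    show "AE p in H \<Otimes>\<^sub>M H. norm (case_prod F p) \<le> norm ((norm (mu (fst p)))\<^sup>2 * (\<bar>g (snd p)\<bar> * norm (mu (snd p)) / lam))"
    proof (rule AE_I2)
      fix p :: "(real^'p) \<times> (real^'p)"
      define x where "x = fst p"
      define y where "y = snd p"
      have "\<bar>F x y\<bar> \<le> \<bar>g y\<bar> * \<bar>Phi y \<bullet> mu x\<bar> * \<bar>mu x $ i\<bar>"
        by (auto simp: F_def abs_mult)
      also have "\<dots> \<le> \<bar>g y\<bar> * (norm (Phi y) * norm (mu x)) * norm (mu x)"
        by (intro mult_mono mult_left_mono inner_le_norms component_le_norm_cart) auto
      also have "\<dots> = (norm (mu x))\<^sup>2 * norm (g y *\<^sub>R Phi y)"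
        by (simp add: power2_eq_square)
      also have "\<dots> \<le> (norm (mu x))\<^sup>2 * (\<bar>g y\<bar> * norm (mu y) / lam)"
        by (intro mult_left_mono lam(2)) simp
      finally show "norm (case_prod F p) \<le> norm ((norm (mu (fst p)))\<^sup>2 * (\<bar>g (snd p)\<bar> * norm (mu (snd p)) / lam))"
        using lam(1) by (simp add: x_def y_def case_prod_beta')
    qed
  qed
  have inner_y: "(\<integral>y. F x y \<partial>H) = Top H mu A g x * mu x $ i" for x
  proof -
    have "(\<integral>y. F x y \<partial>H) = (\<integral>y. (trunc g (zfun A x) y *\<^sub>R Phi y) \<bullet> mu x * mu x $ i \<partial>H)"
      by (intro Bochner_Integration.integral_cong) (auto simp: F_def trunc_def)
    also have "\<dots> = (\<integral>y. (trunc g (zfun A x) y *\<^sub>R Phi y) \<bullet> mu x \<partial>H) * mu x $ i"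
      by (rule integral_mult_left_zero)
    also have "(\<integral>y. (trunc g (zfun A x) y *\<^sub>R Phi y) \<bullet> mu x \<partial>H) = aa g (zfun A x) \<bullet> mu x"
      unfolding aa_def by (intro integral_inner_left aa_int[OF g])
    finally show ?thesis by (simp add: Top_eq[OF g])
  qed
  have inner_x: "(\<integral>x. F x y \<partial>H) = g y * mu y $ i" for y
  proof -
    have "(\<integral>x. F x y \<partial>H) = (\<integral>x. g y * (if zfun A y \<le> zfun A x then mu x $ i * (mu x \<bullet> Phi y) else 0) \<partial>H)"
      by (intro Bochner_Integration.integral_cong) (auto simp: F_def inner_commute)
    also have "\<dots> = g y * (C (zfun A y) *v Phi y) $ i"
      by (simp add: C_mulv)
    finally show ?thesis by (simp add: Kid')
  qed
  have "(\<integral>y. (\<integral>x. F x y \<partial>H) \<partial>H) = (\<integral>x. (\<integral>y. F x y \<partial>H) \<partial>H)"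
    by (rule P.Fubini_integral[OF Fint])
  then show ?thesis by (simp add: inner_x inner_y)
qed

end

context scan_setup
begin

lemma C_bil: "w \<bullet> (C t *v v) = (\<integral>x. (if t \<le> zfun A x then (w \<bullet> mu x) * (mu x \<bullet> v) else 0) \<partial>H)"
proof -
  have "w \<bullet> (C t *v v) = (\<Sum>i\<in>UNIV. w $ i * (C t *v v) $ i)"
    by (simp add: inner_vec_def)
  also have "\<dots> = (\<Sum>i\<in>UNIV. (\<integral>y. (if t \<le> zfun A y then w $ i * (mu y $ i * (mu y \<bullet> v)) else 0) \<partial>H))"
    unfolding C_mulv
    by (intro sum.cong refl, subst integral_mult_right_zero[symmetric], intro Bochner_Integration.integral_cong refl) auto
  also have "\<dots> = (\<integral>y. (\<Sum>i\<in>UNIV. (if t \<le> zfun A y then w $ i * (mu y $ i * (mu y \<bullet> v)) else 0)) \<partial>H)"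
    by (rule Bochner_Integration.integral_sum[symmetric]) (intro integrable_if integrable_mult_right int_mw, simp)
  also have "\<dots> = (\<integral>y. (if t \<le> zfun A y then (w \<bullet> mu y) * (mu y \<bullet> v) else 0) \<partial>H)"
  proof (intro Bochner_Integration.integral_cong refl)
    fix x
    have eq: "(\<Sum>i\<in>UNIV. (if P then w $ i * (mu x $ i * c) else 0)) = (if P then (w \<bullet> mu x) * c else 0)" for P c
      by (cases P) (simp_all add: inner_vec_def sum_distrib_right mult.assoc)
    show "(\<Sum>i\<in>UNIV. (if t \<le> zfun A x then w $ i * (mu x $ i * (mu x \<bullet> v)) else 0)) =
      (if t \<le> zfun A x then (w \<bullet> mu x) * (mu x \<bullet> v) else 0)" by (rule eq)
  qed
  finally show ?thesis .
qed

lemma C_symm_inner: "w \<bullet> (C t *v v) = (C t *v w) \<bullet> v"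
proof -
  have "w \<bullet> (C t *v v) = (w v* C t) \<bullet> v" by (simp add: dot_lmul_matrix)
  also have "w v* C t = transpose (C t) *v w" by simp
  finally show ?thesis by (simp add: C_sym)
qed

lemma Top_bound:
  assumes g: "g \<in> L2 H" and tr: "\<And>y. g y \<noteq> 0 \<Longrightarrow> zfun A y \<le> z0"
  obtains K where "0 \<le> K" "\<And>x. \<bar>Top H mu A g x\<bar> \<le> K * norm (mu x)"
proof -
  obtain K where K: "\<And>t. norm (aa g t) \<le> K" using aa_norm[OF g tr] by blast
  have K0: "0 \<le> K" using K[of 0] norm_ge_zero[of "aa g 0"] by linarith
  have "\<bar>Top H mu A g x\<bar> \<le> K * norm (mu x)" for x
  proof -
    have "\<bar>Top H mu A g x\<bar> \<le> norm (aa g (zfun A x)) * norm (mu x)"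
      unfolding Top_eq[OF g] by (rule inner_le_norms)
    also have "\<dots> \<le> K * norm (mu x)" by (intro mult_right_mono K) simp
    finally show ?thesis .
  qed
  then show ?thesis using that K0 by blast
qed

lemma Top_L2_trunc:
  assumes g: "g \<in> L2 H" and tr: "\<And>y. g y \<noteq> 0 \<Longrightarrow> zfun A y \<le> z0"
  shows "Top H mu A g \<in> L2 H"
proof -
  obtain K where K: "0 \<le> K" "\<And>x. \<bar>Top H mu A g x\<bar> \<le> K * norm (mu x)" using Top_bound[OF g tr] by blast
  have "integrable H (\<lambda>x. (Top H mu A g x)\<^sup>2)"
  proof (rule Bochner_Integration.integrable_bound[where f="\<lambda>x. K\<^sup>2 * (norm (mu x))\<^sup>2"])
    show "integrable H (\<lambda>x. K\<^sup>2 * (norm (mu x))\<^sup>2)" using norm_mu_sq_int by simp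
    show "(\<lambda>x. (Top H mu A g x)\<^sup>2) \<in> borel_measurable H" using Top_meas[OF g] by measurable
    show "AE x in H. norm ((Top H mu A g x)\<^sup>2) \<le> norm (K\<^sup>2 * (norm (mu x))\<^sup>2)"
    proof (rule AE_I2)
      fix x
      have "\<bar>Top H mu A g x\<bar>\<^sup>2 \<le> (K * norm (mu x))\<^sup>2"
        by (rule power_mono[OF K(2)]) simp
      then show "norm ((Top H mu A g x)\<^sup>2) \<le> norm (K\<^sup>2 * (norm (mu x))\<^sup>2)"
        by (simp add: power_mult_distrib)
    qed
  qed
  then show ?thesis using Top_meas[OF g] by (simp add: L2_def)
qed

lemma J_eq:
  assumes g: "g \<in> L2 H" and tr: "\<And>y. g y \<noteq> 0 \<Longrightarrow> zfun A y \<le> z0"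
  shows "(\<integral>x. (if zfun A y \<le> zfun A x then (Phi y \<bullet> mu x) * Top H mu A g x else 0) \<partial>H)
       = (\<integral>y'. g y' * (if zfun A y' \<le> zfun A y then mu y \<bullet> Phi y' else Phi y \<bullet> mu y') \<partial>H)"
proof -
  interpret P: pair_sigma_finite H H by (rule pair_sf)
  obtain lam where lam: "lam > 0" "\<And>y. norm (g y *\<^sub>R Phi y) \<le> \<bar>g y\<bar> * norm (mu y) / lam"
    using trunc_bound[OF tr] by blast
  have gm[measurable]: "g \<in> borel_measurable H" using g by (simp add: L2_def)
  have [measurable]: "(\<lambda>p. g (snd p)) \<in> borel_measurable (H \<Otimes>\<^sub>M H)" by (rule m_snd_g[OF gm])
  define F where "F x y' = (if zfun A y \<le> zfun A x then Phi y \<bullet> mu x else 0) *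
      ((if zfun A y' \<le> zfun A x then g y' else 0) * (Phi y' \<bullet> mu x))" for x y'
  have Fint: "integrable (H \<Otimes>\<^sub>M H) (case_prod F)"
  proof (rule Bochner_Integration.integrable_bound)
    show "integrable (H \<Otimes>\<^sub>M H) (\<lambda>p. (norm (Phi y) * (norm (mu (fst p)))\<^sup>2) * (\<bar>g (snd p)\<bar> * norm (mu (snd p)) / lam))"
      by (rule prod_int_HH) (use norm_mu_sq_int g_mu_int'[OF g] in simp_all)
    show "case_prod F \<in> borel_measurable (H \<Otimes>\<^sub>M H)"
      unfolding F_def case_prod_beta' by measurable
    show "AE p in H \<Otimes>\<^sub>M H. norm (case_prod F p) \<le> norm ((norm (Phi y) * (norm (mu (fst p)))\<^sup>2) * (\<bar>g (snd p)\<bar> * norm (mu (snd p)) / lam))"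
    proof (rule AE_I2)
      fix p :: "(real^'p) \<times> (real^'p)"
      define x where "x = fst p"
      define y' where "y' = snd p"
      have "\<bar>F x y'\<bar> \<le> \<bar>Phi y \<bullet> mu x\<bar> * (\<bar>g y'\<bar> * \<bar>Phi y' \<bullet> mu x\<bar>)"
        by (auto simp: F_def abs_mult)
      also have "\<dots> \<le> (norm (Phi y) * norm (mu x)) * (\<bar>g y'\<bar> * (norm (Phi y') * norm (mu x)))"
        by (intro mult_mono mult_left_mono inner_le_norms) auto
      also have "\<dots> = (norm (Phi y) * (norm (mu x))\<^sup>2) * norm (g y' *\<^sub>R Phi y')"
        by (simp add: power2_eq_square)
      also have "\<dots> \<le> (norm (Phi y) * (norm (mu x))\<^sup>2) * (\<bar>g y'\<bar> * norm (mu y') / lam)"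
        by (intro mult_left_mono lam(2)) simp
      finally show "norm (case_prod F p) \<le> norm ((norm (Phi y) * (norm (mu (fst p)))\<^sup>2) * (\<bar>g (snd p)\<bar> * norm (mu (snd p)) / lam))"
        using lam(1) by (simp add: x_def y'_def case_prod_beta')
    qed
  qed
  have inner_y: "(\<integral>y'. F x y' \<partial>H) = (if zfun A y \<le> zfun A x then (Phi y \<bullet> mu x) * Top H mu A g x else 0)" for x
  proof -
    have "(\<integral>y'. F x y' \<partial>H) = (\<integral>y'. (if zfun A y \<le> zfun A x then Phi y \<bullet> mu x else 0) * ((trunc g (zfun A x) y' *\<^sub>R Phi y') \<bullet> mu x) \<partial>H)"
      by (intro Bochner_Integration.integral_cong) (auto simp: F_def trunc_def)
    also have "\<dots> = (if zfun A y \<le> zfun A x then Phi y \<bullet> mu x else 0) * (\<integral>y'. (trunc g (zfun A x) y' *\<^sub>R Phi y') \<bullet> mu x \<partial>H)"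
      by (rule integral_mult_right_zero)
    also have "(\<integral>y'. (trunc g (zfun A x) y' *\<^sub>R Phi y') \<bullet> mu x \<partial>H) = aa g (zfun A x) \<bullet> mu x"
      unfolding aa_def by (intro integral_inner_left aa_int[OF g])
    finally show ?thesis by (simp add: Top_eq[OF g])
  qed
  have inner_x: "(\<integral>x. F x y' \<partial>H) = g y' * (if zfun A y' \<le> zfun A y then mu y \<bullet> Phi y' else Phi y \<bullet> mu y')" for y'
  proof -
    let ?m = "max (zfun A y) (zfun A y')"
    have "(\<integral>x. F x y' \<partial>H) = (\<integral>x. g y' * (if ?m \<le> zfun A x then (Phi y \<bullet> mu x) * (mu x \<bullet> Phi y') else 0) \<partial>H)"
      by (intro Bochner_Integration.integral_cong) (auto simp: F_def inner_commute)
    also have "\<dots> = g y' * (Phi y \<bullet> (C ?m *v Phi y'))"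
      by (simp add: C_bil)
    also have "Phi y \<bullet> (C ?m *v Phi y') = (if zfun A y' \<le> zfun A y then mu y \<bullet> Phi y' else Phi y \<bullet> mu y')"
    proof (cases "zfun A y' \<le> zfun A y")
      case True
      then have "?m = zfun A y" by simp
      then show ?thesis using True by (simp add: C_symm_inner Kid')
    next
      case False
      then have "?m = zfun A y'" by simp
      then show ?thesis using False by (simp add: Kid')
    qed
    finally show ?thesis .
  qed
  have "(\<integral>y'. (\<integral>x. F x y' \<partial>H) \<partial>H) = (\<integral>x. (\<integral>y'. F x y' \<partial>H) \<partial>H)"
    by (rule P.Fubini_integral[OF Fint])
  then show ?thesis by (simp add: inner_x inner_y)
qed

end

context scan_setup
begin

definition "JJ g y = (\<integral>x. (if zfun A y \<le> zfun A x then (Phi y \<bullet> mu x) * Top H mu A g x else 0) \<partial>H)"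

lemma gTop_int:
  assumes g: "g \<in> L2 H" and tr: "\<And>y. g y \<noteq> 0 \<Longrightarrow> zfun A y \<le> z0"
  shows "integrable H (\<lambda>x. g x * Top H mu A g x)"
  using L2_mult_integrable[OF g Top_L2_trunc[OF g tr]] .

lemma sq_eq:
  assumes g: "g \<in> L2 H" and tr: "\<And>y. g y \<noteq> 0 \<Longrightarrow> zfun A y \<le> z0"
  shows "(\<integral>x. (Top H mu A g x)\<^sup>2 \<partial>H) = (\<integral>y. g y * JJ g y \<partial>H)"
proof -
  interpret P: pair_sigma_finite H H by (rule pair_sf)
  obtain lam where lam: "lam > 0" "\<And>y. norm (g y *\<^sub>R Phi y) \<le> \<bar>g y\<bar> * norm (mu y) / lam"
    using trunc_bound[OF tr] by blast
  obtain K where K: "0 \<le> K" "\<And>x. \<bar>Top H mu A g x\<bar> \<le> K * norm (mu x)" using Top_bound[OF g tr] by blast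
  have gm[measurable]: "g \<in> borel_measurable H" using g by (simp add: L2_def)
  have [measurable]: "(\<lambda>p. g (snd p)) \<in> borel_measurable (H \<Otimes>\<^sub>M H)" by (rule m_snd_g[OF gm])
  have [measurable]: "(\<lambda>p. Top H mu A g (fst p)) \<in> borel_measurable (H \<Otimes>\<^sub>M H)"
    by (rule m_fst_g[OF Top_meas[OF g]])
  define F where "F x y = (if zfun A y \<le> zfun A x then g y else 0) * (Phi y \<bullet> mu x) * Top H mu A g x" for x y
  have Fint: "integrable (H \<Otimes>\<^sub>M H) (case_prod F)"
  proof (rule Bochner_Integration.integrable_bound)
    show "integrable (H \<Otimes>\<^sub>M H) (\<lambda>p. (K * (norm (mu (fst p)))\<^sup>2) * (\<bar>g (snd p)\<bar> * norm (mu (snd p)) / lam))"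
      by (rule prod_int_HH) (use norm_mu_sq_int g_mu_int'[OF g] in simp_all)
    show "case_prod F \<in> borel_measurable (H \<Otimes>\<^sub>M H)"
      unfolding F_def case_prod_beta' by measurable
    show "AE p in H \<Otimes>\<^sub>M H. norm (case_prod F p) \<le> norm ((K * (norm (mu (fst p)))\<^sup>2) * (\<bar>g (snd p)\<bar> * norm (mu (snd p)) / lam))"
    proof (rule AE_I2)
      fix p :: "(real^'p) \<times> (real^'p)"
      define x where "x = fst p"
      define y where "y = snd p"
      have "\<bar>F x y\<bar> \<le> \<bar>g y\<bar> * \<bar>Phi y \<bullet> mu x\<bar> * \<bar>Top H mu A g x\<bar>"
        by (auto simp: F_def abs_mult)
      also have "\<dots> \<le> \<bar>g y\<bar> * (norm (Phi y) * norm (mu x)) * (K * norm (mu x))"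
        by (intro mult_mono mult_left_mono inner_le_norms K(2)) (auto intro: mult_nonneg_nonneg K(1))
      also have "\<dots> = (K * (norm (mu x))\<^sup>2) * norm (g y *\<^sub>R Phi y)"
        by (simp add: power2_eq_square)
      also have "\<dots> \<le> (K * (norm (mu x))\<^sup>2) * (\<bar>g y\<bar> * norm (mu y) / lam)"
        by (intro mult_left_mono lam(2)) (simp add: K(1))
      finally show "norm (case_prod F p) \<le> norm ((K * (norm (mu (fst p)))\<^sup>2) * (\<bar>g (snd p)\<bar> * norm (mu (snd p)) / lam))"
        using lam(1) K(1) by (simp add: x_def y_def case_prod_beta')
    qed
  qed
  have inner_y: "(\<integral>y. F x y \<partial>H) = (Top H mu A g x)\<^sup>2" for x
  proof -
    have "(\<integral>y. F x y \<partial>H) = (\<integral>y. ((trunc g (zfun A x) y *\<^sub>R Phi y) \<bullet> mu x) * Top H mu A g x \<partial>H)"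
      by (intro Bochner_Integration.integral_cong) (auto simp: F_def trunc_def)
    also have "\<dots> = (\<integral>y. (trunc g (zfun A x) y *\<^sub>R Phi y) \<bullet> mu x \<partial>H) * Top H mu A g x"
      by (rule integral_mult_left_zero)
    also have "(\<integral>y. (trunc g (zfun A x) y *\<^sub>R Phi y) \<bullet> mu x \<partial>H) = aa g (zfun A x) \<bullet> mu x"
      unfolding aa_def by (intro integral_inner_left aa_int[OF g])
    finally show ?thesis by (simp add: Top_eq[OF g] power2_eq_square)
  qed
  have inner_x: "(\<integral>x. F x y \<partial>H) = g y * JJ g y" for y
  proof -
    have "(\<integral>x. F x y \<partial>H) = (\<integral>x. g y * (if zfun A y \<le> zfun A x then (Phi y \<bullet> mu x) * Top H mu A g x else 0) \<partial>H)"
      by (intro Bochner_Integration.integral_cong) (auto simp: F_def)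
    then show ?thesis by (simp add: JJ_def)
  qed
  have "(\<integral>y. (\<integral>x. F x y \<partial>H) \<partial>H) = (\<integral>x. (\<integral>y. F x y \<partial>H) \<partial>H)"
    by (rule P.Fubini_integral[OF Fint])
  then show ?thesis by (simp add: inner_x inner_y)
qed

lemma g_inner_mu_int:
  assumes g: "g \<in> L2 H"
  shows "integrable H (\<lambda>y. g y * (v \<bullet> mu y))"
proof -
  have "(\<lambda>y. g y * (v \<bullet> mu y)) = (\<lambda>y. \<Sum>k\<in>UNIV. v $ k * (g y * mu y $ k))"
    by (simp add: inner_vec_def sum_distrib_left algebra_simps)
  moreover have "integrable H (\<lambda>y. \<Sum>k\<in>UNIV. v $ k * (g y * mu y $ k))"
    by (intro Bochner_Integration.integrable_sum integrable_mult_right L2_mult_integrable[OF g mu_L2])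
  ultimately show ?thesis by simp
qed

lemma aa_strict:
  assumes g: "g \<in> L2 H"
  shows "(\<integral>y. (if zfun A y < t then g y else 0) *\<^sub>R Phi y \<partial>H) = aa g t"
  unfolding aa_def
proof (rule integral_cong_AE)
  have gm[measurable]: "g \<in> borel_measurable H" using g by (simp add: L2_def)
  show "(\<lambda>y. (if zfun A y < t then g y else 0) *\<^sub>R Phi y) \<in> borel_measurable H" by measurable
  show "(\<lambda>y. trunc g t y *\<^sub>R Phi y) \<in> borel_measurable H" unfolding trunc_def by measurable
  show "AE y in H. (if zfun A y < t then g y else 0) *\<^sub>R Phi y = trunc g t y *\<^sub>R Phi y"
    using ties[of t] by eventually_elim (auto simp: trunc_def)
qed

lemma cross_eq:
  assumes g: "g \<in> L2 H" and tr: "\<And>y. g y \<noteq> 0 \<Longrightarrow> zfun A y \<le> z0"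
  shows "(\<integral>y. g y * JJ g y \<partial>H) = 2 * (\<integral>y. g y * Top H mu A g y \<partial>H)"
proof -
  interpret P: pair_sigma_finite H H by (rule pair_sf)
  obtain lam where lam: "lam > 0" "\<And>y. norm (g y *\<^sub>R Phi y) \<le> \<bar>g y\<bar> * norm (mu y) / lam"
    using trunc_bound[OF tr] by blast
  have gm[measurable]: "g \<in> borel_measurable H" using g by (simp add: L2_def)
  have [measurable]: "(\<lambda>p. g (snd p)) \<in> borel_measurable (H \<Otimes>\<^sub>M H)" by (rule m_snd_g[OF gm])
  have [measurable]: "(\<lambda>p. g (fst p)) \<in> borel_measurable (H \<Otimes>\<^sub>M H)" by (rule m_fst_g[OF gm])
  define T2 where "T2 y = (\<integral>y'. (if zfun A y < zfun A y' then g y' * (Phi y \<bullet> mu y') else 0) \<partial>H)" for y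
  have J_split: "JJ g y = Top H mu A g y + T2 y" for y
  proof -
    have "JJ g y = (\<integral>y'. g y' * (if zfun A y' \<le> zfun A y then mu y \<bullet> Phi y' else Phi y \<bullet> mu y') \<partial>H)"
      unfolding JJ_def by (rule J_eq[OF g tr])
    also have "\<dots> = (\<integral>y'. ((trunc g (zfun A y) y' *\<^sub>R Phi y') \<bullet> mu y) +
        (if zfun A y < zfun A y' then g y' * (Phi y \<bullet> mu y') else 0) \<partial>H)"
      by (intro Bochner_Integration.integral_cong refl) (auto simp: trunc_def inner_commute)
    also have "\<dots> = (\<integral>y'. (trunc g (zfun A y) y' *\<^sub>R Phi y') \<bullet> mu y \<partial>H) + T2 y"
    proof -
      have i1: "integrable H (\<lambda>y'. (trunc g (zfun A y) y' *\<^sub>R Phi y') \<bullet> mu y)"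
        by (intro integrable_inner_left aa_int[OF g])
      have i2: "integrable H (\<lambda>y'. if zfun A y < zfun A y' then g y' * (Phi y \<bullet> mu y') else 0)"
        by (rule integrable_if[OF g_inner_mu_int[OF g, of "Phi y"]]) simp
      show ?thesis unfolding T2_def by (rule Bochner_Integration.integral_add[OF i1 i2])
    qed
    also have "(\<integral>y'. (trunc g (zfun A y) y' *\<^sub>R Phi y') \<bullet> mu y \<partial>H) = Top H mu A g y"
      unfolding Top_eq[OF g] aa_def by (intro integral_inner_left aa_int[OF g])
    finally show ?thesis .
  qed
  define G where "G y y' = g y * (if zfun A y < zfun A y' then g y' * (Phi y \<bullet> mu y') else 0)" for y y'
  have Gint: "integrable (H \<Otimes>\<^sub>M H) (case_prod G)"
  proof (rule Bochner_Integration.integrable_bound)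
    show "integrable (H \<Otimes>\<^sub>M H) (\<lambda>p. (\<bar>g (fst p)\<bar> * norm (mu (fst p)) / lam) * (\<bar>g (snd p)\<bar> * norm (mu (snd p))))"
      by (rule prod_int_HH) (use g_mu_int'[OF g] in simp_all)
    show "case_prod G \<in> borel_measurable (H \<Otimes>\<^sub>M H)"
      unfolding G_def case_prod_beta' by measurable
    show "AE p in H \<Otimes>\<^sub>M H. norm (case_prod G p) \<le> norm ((\<bar>g (fst p)\<bar> * norm (mu (fst p)) / lam) * (\<bar>g (snd p)\<bar> * norm (mu (snd p))))"
    proof (rule AE_I2)
      fix p :: "(real^'p) \<times> (real^'p)"
      define y where "y = fst p"
      define y' where "y' = snd p"
      have "\<bar>G y y'\<bar> \<le> \<bar>g y\<bar> * (\<bar>g y'\<bar> * \<bar>Phi y \<bullet> mu y'\<bar>)"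
        by (auto simp: G_def abs_mult)
      also have "\<dots> \<le> \<bar>g y\<bar> * (\<bar>g y'\<bar> * (norm (Phi y) * norm (mu y')))"
        by (intro mult_mono mult_left_mono inner_le_norms) auto
      also have "\<dots> = norm (g y *\<^sub>R Phi y) * (\<bar>g y'\<bar> * norm (mu y'))"
        by (simp add: mult_ac)
      also have "\<dots> \<le> (\<bar>g y\<bar> * norm (mu y) / lam) * (\<bar>g y'\<bar> * norm (mu y'))"
        by (intro mult_right_mono lam(2)) simp
      finally show "norm (case_prod G p) \<le> norm ((\<bar>g (fst p)\<bar> * norm (mu (fst p)) / lam) * (\<bar>g (snd p)\<bar> * norm (mu (snd p))))"
        using lam(1) by (simp add: y_def y'_def case_prod_beta')
    qed
  qed
  have G_y: "(\<integral>y'. G y y' \<partial>H) = g y * T2 y" for y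
    unfolding G_def T2_def by (rule integral_mult_right_zero)
  have G_y': "(\<integral>y. G y y' \<partial>H) = g y' * Top H mu A g y'" for y'
  proof -
    have "(\<integral>y. G y y' \<partial>H) = (\<integral>y. ((if zfun A y < zfun A y' then g y else 0) *\<^sub>R Phi y) \<bullet> mu y' * g y' \<partial>H)"
      by (intro Bochner_Integration.integral_cong) (auto simp: G_def)
    also have "\<dots> = (\<integral>y. ((if zfun A y < zfun A y' then g y else 0) *\<^sub>R Phi y) \<bullet> mu y' \<partial>H) * g y'"
      by (rule integral_mult_left_zero)
    also have "(\<integral>y. ((if zfun A y < zfun A y' then g y else 0) *\<^sub>R Phi y) \<bullet> mu y' \<partial>H)
        = (\<integral>y. (if zfun A y < zfun A y' then g y else 0) *\<^sub>R Phi y \<partial>H) \<bullet> mu y'"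
    proof (intro integral_inner_left)
      have "integrable H (\<lambda>y. trunc g (zfun A y') y *\<^sub>R Phi y)" by (rule aa_int[OF g])
      then show "integrable H (\<lambda>y. (if zfun A y < zfun A y' then g y else 0) *\<^sub>R Phi y)"
      proof (rule Bochner_Integration.integrable_bound)
        show "(\<lambda>y. (if zfun A y < zfun A y' then g y else 0) *\<^sub>R Phi y) \<in> borel_measurable H" by measurable
        show "AE y in H. norm ((if zfun A y < zfun A y' then g y else 0) *\<^sub>R Phi y) \<le> norm (trunc g (zfun A y') y *\<^sub>R Phi y)"
          by (intro AE_I2) (auto simp: trunc_def)
      qed
    qed
    also have "\<dots> = Top H mu A g y'" by (simp add: aa_strict[OF g] Top_eq[OF g])
    finally show ?thesis by simp
  qed
  have gT2_int: "integrable H (\<lambda>y. g y * T2 y)"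
    using P.integrable_fst[OF Gint] by (simp add: G_y)
  have "(\<integral>y. g y * T2 y \<partial>H) = (\<integral>y. g y * Top H mu A g y \<partial>H)"
  proof -
    have "(\<integral>y'. (\<integral>y. G y y' \<partial>H) \<partial>H) = (\<integral>y. (\<integral>y'. G y y' \<partial>H) \<partial>H)"
      by (rule P.Fubini_integral[OF Gint])
    then show ?thesis by (simp add: G_y G_y')
  qed
  moreover have "(\<integral>y. g y * JJ g y \<partial>H) = (\<integral>y. g y * Top H mu A g y \<partial>H) + (\<integral>y. g y * T2 y \<partial>H)"
    unfolding J_split distrib_left
    by (rule Bochner_Integration.integral_add[OF gTop_int[OF g tr] gT2_int])
  ultimately show ?thesis by simp
qed

lemma iso_trunc:
  assumes g: "g \<in> L2 H" and tr: "\<And>y. g y \<noteq> 0 \<Longrightarrow> zfun A y \<le> z0"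
  shows "(\<integral>x. (Kop H mu A g x)\<^sup>2 \<partial>H) = (\<integral>x. (g x)\<^sup>2 \<partial>H)"
proof -
  have T: "Top H mu A g \<in> L2 H" by (rule Top_L2_trunc[OF g tr])
  have i1: "integrable H (\<lambda>x. (g x)\<^sup>2)" using g by (simp add: L2_def)
  have i2: "integrable H (\<lambda>x. g x * Top H mu A g x)" by (rule gTop_int[OF g tr])
  have i3: "integrable H (\<lambda>x. (Top H mu A g x)\<^sup>2)" using T by (simp add: L2_def)
  have "(\<integral>x. (Kop H mu A g x)\<^sup>2 \<partial>H) = (\<integral>x. (g x)\<^sup>2 - 2 * (g x * Top H mu A g x) + (Top H mu A g x)\<^sup>2 \<partial>H)"
    by (intro Bochner_Integration.integral_cong) (auto simp: Kop_def power2_eq_square algebra_simps)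
  also have "\<dots> = (\<integral>x. (g x)\<^sup>2 \<partial>H) - 2 * (\<integral>x. g x * Top H mu A g x \<partial>H) + (\<integral>x. (Top H mu A g x)\<^sup>2 \<partial>H)"
    using i1 i2 i3 by simp
  also have "(\<integral>x. (Top H mu A g x)\<^sup>2 \<partial>H) = 2 * (\<integral>x. g x * Top H mu A g x \<partial>H)"
    using sq_eq[OF g tr] cross_eq[OF g tr] by simp
  finally show ?thesis by simp
qed

end

lemma L2_lin:
  fixes f g :: "'a \<Rightarrow> real"
  assumes "f \<in> L2 M" "g \<in> L2 M"
  shows "(\<lambda>x. a * f x + c * g x) \<in> L2 M"
proof -
  have fm: "f \<in> borel_measurable M" and gm: "g \<in> borel_measurable M" using assms by (auto simp: L2_def)
  have i: "integrable M (\<lambda>x. a\<^sup>2 * (f x)\<^sup>2 + c\<^sup>2 * (g x)\<^sup>2 + 2 * a * c * (f x * g x))"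
    using assms L2_mult_integrable[OF assms] by (auto simp: L2_def)
  have "(\<lambda>x. (a * f x + c * g x)\<^sup>2) = (\<lambda>x. a\<^sup>2 * (f x)\<^sup>2 + c\<^sup>2 * (g x)\<^sup>2 + 2 * a * c * (f x * g x))"
    by (auto simp: power2_eq_square algebra_simps)
  then have "integrable M (\<lambda>x. (a * f x + c * g x)\<^sup>2)" using i by simp
  then show ?thesis using fm gm by (simp add: L2_def)
qed

lemma L2_diff:
  fixes f g :: "'a \<Rightarrow> real"
  assumes "f \<in> L2 M" "g \<in> L2 M"
  shows "(\<lambda>x. f x - g x) \<in> L2 M"
  using L2_lin[OF assms, of 1 "-1"] by simp

lemma L2_add:
  fixes f g :: "'a \<Rightarrow> real"
  assumes "f \<in> L2 M" "g \<in> L2 M"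
  shows "(\<lambda>x. f x + g x) \<in> L2 M"
  using L2_lin[OF assms, of 1 1] by simp

context scan_setup
begin

lemma aa_lin:
  assumes g1: "g1 \<in> L2 H" and g2: "g2 \<in> L2 H"
  shows "aa (\<lambda>x. a * g1 x + c * g2 x) t = a *\<^sub>R aa g1 t + c *\<^sub>R aa g2 t"
proof -
  have "aa (\<lambda>x. a * g1 x + c * g2 x) t = (\<integral>y. a *\<^sub>R (trunc g1 t y *\<^sub>R Phi y) + c *\<^sub>R (trunc g2 t y *\<^sub>R Phi y) \<partial>H)"
    unfolding aa_def by (intro Bochner_Integration.integral_cong) (auto simp: trunc_def algebra_simps)
  also have "\<dots> = (\<integral>y. a *\<^sub>R (trunc g1 t y *\<^sub>R Phi y) \<partial>H) + (\<integral>y. c *\<^sub>R (trunc g2 t y *\<^sub>R Phi y) \<partial>H)"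
    by (rule Bochner_Integration.integral_add[OF integrable_scaleR_right[OF aa_int[OF g1]] integrable_scaleR_right[OF aa_int[OF g2]]])
  also have "\<dots> = a *\<^sub>R aa g1 t + c *\<^sub>R aa g2 t"
    unfolding aa_def by (simp only: integral_scaleR_right)
  finally show ?thesis .
qed

lemma Top_lin:
  assumes g1: "g1 \<in> L2 H" and g2: "g2 \<in> L2 H"
  shows "Top H mu A (\<lambda>x. a * g1 x + c * g2 x) x = a * Top H mu A g1 x + c * Top H mu A g2 x"
  using L2_lin[OF g1 g2, of a c]
  by (simp add: Top_eq g1 g2 aa_lin inner_add_left)

lemma Kop_lin:
  assumes g1: "g1 \<in> L2 H" and g2: "g2 \<in> L2 H"
  shows "Kop H mu A (\<lambda>x. a * g1 x + c * g2 x) x = a * Kop H mu A g1 x + c * Kop H mu A g2 x"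
  unfolding Kop_def Top_lin[OF g1 g2] by (simp add: algebra_simps)

lemma Kop_diff:
  assumes g1: "g1 \<in> L2 H" and g2: "g2 \<in> L2 H"
  shows "Kop H mu A (\<lambda>x. g1 x - g2 x) x = Kop H mu A g1 x - Kop H mu A g2 x"
  using Kop_lin[OF g1 g2, of 1 "-1"] by simp

lemma Kop_add:
  assumes g1: "g1 \<in> L2 H" and g2: "g2 \<in> L2 H"
  shows "Kop H mu A (\<lambda>x. g1 x + g2 x) x = Kop H mu A g1 x + Kop H mu A g2 x"
  using Kop_lin[OF g1 g2, of 1 1] by simp

lemma trunc_trunc: "t \<le> s \<Longrightarrow> trunc (trunc g s) t = trunc g t"
  by (auto simp: trunc_def fun_eq_iff)

lemma Kop_trunc_eq:
  assumes g: "g \<in> L2 H" and x: "zfun A x \<le> s"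
  shows "Kop H mu A (trunc g s) x = Kop H mu A g x"
proof -
  have "aa (trunc g s) (zfun A x) = aa g (zfun A x)"
    unfolding aa_def using x by (simp add: trunc_trunc)
  then have "Top H mu A (trunc g s) x = Top H mu A g x"
    by (simp add: Top_eq g trunc_L2[OF g])
  moreover have "trunc g s x = g x" using x by (simp add: trunc_def)
  ultimately show ?thesis by (simp add: Kop_def)
qed

lemma Kop_trunc_L2:
  assumes g: "g \<in> L2 H" and tr: "\<And>y. g y \<noteq> 0 \<Longrightarrow> zfun A y \<le> z0"
  shows "Kop H mu A g \<in> L2 H"
  unfolding Kop_def by (rule L2_diff[OF g Top_L2_trunc[OF g tr]])

lemma trunc_sq_le: assumes g: "g \<in> L2 H" shows "(\<integral>x. (trunc g t x)\<^sup>2 \<partial>H) \<le> (\<integral>x. (g x)\<^sup>2 \<partial>H)"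
proof -
  have "integrable H (\<lambda>x. (trunc g t x)\<^sup>2)" using trunc_L2[OF g, of t] by (simp add: L2_def)
  then show ?thesis by (rule integral_mono) (use g in \<open>auto simp: L2_def trunc_def\<close>)
qed

lemma Kop_L2:
  assumes g: "g \<in> L2 H"
  shows "Kop H mu A g \<in> L2 H" and "(\<integral>x. (Kop H mu A g x)\<^sup>2 \<partial>H) \<le> (\<integral>x. (g x)\<^sup>2 \<partial>H)"
proof -
  let ?K = "Kop H mu A g"
  define f where "f n x = (if zfun A x \<le> real n then (?K x)\<^sup>2 else 0)" for n x
  have Km: "?K \<in> borel_measurable H" by (rule Kop_meas[OF g])
  have gn: "trunc g (real n) \<in> L2 H" for n by (rule trunc_L2[OF g])
  have KnL2: "Kop H mu A (trunc g (real n)) \<in> L2 H" for n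
    by (rule Kop_trunc_L2[OF gn trunc_tr])
  have f_eq: "f n x = (if zfun A x \<le> real n then (Kop H mu A (trunc g (real n)) x)\<^sup>2 else 0)" for n x
    by (auto simp: f_def Kop_trunc_eq[OF g])
  have fint: "integrable H (f n)" for n
    unfolding f_eq[abs_def] using KnL2[of n] by (intro integrable_if) (auto simp: L2_def)
  have fle: "integral\<^sup>L H (f n) \<le> (\<integral>x. (g x)\<^sup>2 \<partial>H)" for n
  proof -
    have "integral\<^sup>L H (f n) \<le> (\<integral>x. (Kop H mu A (trunc g (real n)) x)\<^sup>2 \<partial>H)"
      by (rule integral_mono[OF fint]) (use KnL2[of n] in \<open>auto simp: L2_def f_eq\<close>)
    also have "\<dots> = (\<integral>x. (trunc g (real n) x)\<^sup>2 \<partial>H)" by (rule iso_trunc[OF gn trunc_tr])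
    also have "\<dots> \<le> (\<integral>x. (g x)\<^sup>2 \<partial>H)" by (rule trunc_sq_le[OF g])
    finally show ?thesis .
  qed
  have mono: "mono (\<lambda>n. f n x)" for x
    by (rule monoI) (auto simp: f_def)
  have incI: "incseq (\<lambda>n. integral\<^sup>L H (f n))"
    by (rule monoI, rule integral_mono[OF fint fint]) (auto simp: f_def)
  have bdd: "bdd_above (range (\<lambda>n. integral\<^sup>L H (f n)))"
    using fle by (intro bdd_aboveI) auto
  have conv: "(\<lambda>n. integral\<^sup>L H (f n)) \<longlonglongrightarrow> (SUP n. integral\<^sup>L H (f n))"
    by (rule LIMSEQ_incseq_SUP[OF bdd incI])
  have lim: "(\<lambda>n. f n x) \<longlonglongrightarrow> (?K x)\<^sup>2" for x
  proof (rule tendsto_eventually)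
    obtain N :: nat where "zfun A x \<le> real N" using real_arch_simple by blast
    then show "\<forall>\<^sub>F n in sequentially. f n x = (?K x)\<^sup>2"
      unfolding eventually_sequentially
      by (intro exI[of _ N]) (auto simp: f_def intro: order_trans)
  qed
  have um: "(\<lambda>x. (?K x)\<^sup>2) \<in> borel_measurable H" using Km by measurable
  have I: "integrable H (\<lambda>x. (?K x)\<^sup>2)"
    by (rule integrable_monotone_convergence[OF fint _ _ conv um]) (auto intro: lim mono)
  have E: "(\<integral>x. (?K x)\<^sup>2 \<partial>H) = (SUP n. integral\<^sup>L H (f n))"
    by (rule integral_monotone_convergence[OF fint _ _ conv um]) (auto intro: lim mono)
  show "?K \<in> L2 H" using I Km by (simp add: L2_def)
  show "(\<integral>x. (?K x)\<^sup>2 \<partial>H) \<le> (\<integral>x. (g x)\<^sup>2 \<partial>H)"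
    unfolding E by (rule cSUP_least) (auto intro: fle)
qed

lemma tail_lim:
  assumes g: "g \<in> L2 H"
  shows "(\<lambda>n. \<integral>x. (g x - trunc g (real n) x)\<^sup>2 \<partial>H) \<longlonglongrightarrow> 0"
proof -
  have gm: "g \<in> borel_measurable H" using g by (simp add: L2_def)
  have "(\<lambda>n. \<integral>x. (g x - trunc g (real n) x)\<^sup>2 \<partial>H) \<longlonglongrightarrow> (\<integral>x. 0 \<partial>H)"
  proof (rule integral_dominated_convergence[where w="\<lambda>x. (g x)\<^sup>2"])
    show "(\<lambda>x. 0::real) \<in> borel_measurable H" by simp
    show "(\<lambda>x. (g x - trunc g (real n) x)\<^sup>2) \<in> borel_measurable H" for n
      using gm unfolding trunc_def by measurable
    show "integrable H (\<lambda>x. (g x)\<^sup>2)" using g by (simp add: L2_def)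
    show "AE x in H. (\<lambda>n. (g x - trunc g (real n) x)\<^sup>2) \<longlonglongrightarrow> 0"
    proof (rule AE_I2, rule tendsto_eventually)
      fix x
      obtain N :: nat where "zfun A x \<le> real N" using real_arch_simple by blast
      then show "\<forall>\<^sub>F n in sequentially. (g x - trunc g (real n) x)\<^sup>2 = 0"
        unfolding eventually_sequentially
        by (intro exI[of _ N]) (auto simp: trunc_def intro: order_trans)
    qed
    show "AE x in H. norm ((g x - trunc g (real n) x)\<^sup>2) \<le> (g x)\<^sup>2" for n
      by (intro AE_I2) (auto simp: trunc_def)
  qed
  then show ?thesis by simp
qed

lemma trunc_lim:
  assumes g: "g \<in> L2 H"
  shows "(\<lambda>n. \<integral>x. (trunc g (real n) x)\<^sup>2 \<partial>H) \<longlonglongrightarrow> (\<integral>x. (g x)\<^sup>2 \<partial>H)"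
proof (rule integral_dominated_convergence[where w="\<lambda>x. (g x)\<^sup>2"])
  have gm: "g \<in> borel_measurable H" using g by (simp add: L2_def)
  show "(\<lambda>x. (g x)\<^sup>2) \<in> borel_measurable H" using gm by measurable
  show "(\<lambda>x. (trunc g (real n) x)\<^sup>2) \<in> borel_measurable H" for n
    using gm unfolding trunc_def by measurable
  show "integrable H (\<lambda>x. (g x)\<^sup>2)" using g by (simp add: L2_def)
  show "AE x in H. (\<lambda>n. (trunc g (real n) x)\<^sup>2) \<longlonglongrightarrow> (g x)\<^sup>2"
  proof (rule AE_I2, rule tendsto_eventually)
    fix x
    obtain N :: nat where "zfun A x \<le> real N" using real_arch_simple by blast
    then show "\<forall>\<^sub>F n in sequentially. (trunc g (real n) x)\<^sup>2 = (g x)\<^sup>2"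
      unfolding eventually_sequentially
      by (intro exI[of _ N]) (auto simp: trunc_def intro: order_trans)
  qed
  show "AE x in H. norm ((trunc g (real n) x)\<^sup>2) \<le> (g x)\<^sup>2" for n
    by (intro AE_I2) (auto simp: trunc_def)
qed

end

context scan_setup
begin

lemma iso:
  assumes g: "g \<in> L2 H"
  shows "(\<integral>x. (Kop H mu A g x)\<^sup>2 \<partial>H) = (\<integral>x. (g x)\<^sup>2 \<partial>H)"
proof -
  define gn where "gn n = trunc g (real n)" for n
  define dn where "dn n = (\<lambda>x. g x - gn n x)" for n
  let ?K = "Kop H mu A g"
  let ?Kn = "\<lambda>n. Kop H mu A (gn n)"
  define X where "X = (\<integral>x. (?K x)\<^sup>2 \<partial>H)"
  define Y where "Y = (\<integral>x. (g x)\<^sup>2 \<partial>H)"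
  define a where "a n = (\<integral>x. (gn n x)\<^sup>2 \<partial>H)" for n
  define e where "e n = (\<integral>x. (dn n x)\<^sup>2 \<partial>H)" for n
  have gnL2: "gn n \<in> L2 H" for n unfolding gn_def by (rule trunc_L2[OF g])
  have dnL2: "dn n \<in> L2 H" for n unfolding dn_def by (rule L2_diff[OF g gnL2])
  have KL2: "?K \<in> L2 H" by (rule Kop_L2(1)[OF g])
  have KnL2: "?Kn n \<in> L2 H" for n by (rule Kop_L2(1)[OF gnL2])
  have XY: "X \<le> Y" unfolding X_def Y_def by (rule Kop_L2(2)[OF g])
  have an: "(\<integral>x. (?Kn n x)\<^sup>2 \<partial>H) = a n" for n
    unfolding a_def gn_def by (rule iso_trunc[OF trunc_L2[OF g] trunc_tr])
  have aY: "a n \<le> Y" for n unfolding a_def Y_def gn_def by (rule trunc_sq_le[OF g])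
  have Kd: "Kop H mu A (dn n) x = ?K x - ?Kn n x" for n x
    unfolding dn_def by (rule Kop_diff[OF g gnL2])
  have e_bound: "(\<integral>x. (?K x - ?Kn n x)\<^sup>2 \<partial>H) \<le> e n" for n
  proof -
    have "(\<integral>x. (?K x - ?Kn n x)\<^sup>2 \<partial>H) = (\<integral>x. (Kop H mu A (dn n) x)\<^sup>2 \<partial>H)" by (simp add: Kd)
    also have "\<dots> \<le> e n" unfolding e_def by (rule Kop_L2(2)[OF dnL2])
    finally show ?thesis .
  qed
  have key: "(X - a n)\<^sup>2 \<le> e n * (4 * Y)" for n
  proof -
    have dL2: "(\<lambda>x. ?K x - ?Kn n x) \<in> L2 H" by (rule L2_diff[OF KL2 KnL2])
    have sL2: "(\<lambda>x. ?K x + ?Kn n x) \<in> L2 H" by (rule L2_add[OF KL2 KnL2])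
    have "X - a n = (\<integral>x. (?K x)\<^sup>2 - (?Kn n x)\<^sup>2 \<partial>H)"
      unfolding X_def an[symmetric] using KL2 KnL2 by (simp add: L2_def)
    also have "\<dots> = (\<integral>x. (?K x - ?Kn n x) * (?K x + ?Kn n x) \<partial>H)"
      by (intro Bochner_Integration.integral_cong) (auto simp: power2_eq_square algebra_simps)
    finally have eq: "X - a n = (\<integral>x. (?K x - ?Kn n x) * (?K x + ?Kn n x) \<partial>H)" .
    have s_le: "(\<integral>x. (?K x + ?Kn n x)\<^sup>2 \<partial>H) \<le> 4 * Y"
    proof -
      have "(\<integral>x. (?K x + ?Kn n x)\<^sup>2 \<partial>H) \<le> (\<integral>x. 2 * (?K x)\<^sup>2 + 2 * (?Kn n x)\<^sup>2 \<partial>H)"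
      proof (rule integral_mono)
        show "integrable H (\<lambda>x. (?K x + ?Kn n x)\<^sup>2)" using sL2 by (simp add: L2_def)
        show "integrable H (\<lambda>x. 2 * (?K x)\<^sup>2 + 2 * (?Kn n x)\<^sup>2)" using KL2 KnL2 by (simp add: L2_def)
        fix x
        have "0 \<le> (?K x - ?Kn n x)\<^sup>2" by simp
        then show "(?K x + ?Kn n x)\<^sup>2 \<le> 2 * (?K x)\<^sup>2 + 2 * (?Kn n x)\<^sup>2"
          by (simp add: power2_eq_square algebra_simps)
      qed
      also have "\<dots> = 2 * X + 2 * a n"
        unfolding X_def an[symmetric] using KL2 KnL2 by (simp add: L2_def)
      also have "\<dots> \<le> 4 * Y" using XY aY[of n] by simp
      finally show ?thesis .
    qed
    have "(X - a n)\<^sup>2 \<le> (\<integral>x. (?K x - ?Kn n x)\<^sup>2 \<partial>H) * (\<integral>x. (?K x + ?Kn n x)\<^sup>2 \<partial>H)"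
      unfolding eq by (rule real_Cauchy_Schwarz_int[OF dL2 sL2])
    also have "\<dots> \<le> e n * (4 * Y)"
      by (intro mult_mono e_bound s_le) (auto intro: integral_nonneg_AE order_trans[OF _ e_bound])
    finally show ?thesis .
  qed
  have lim1: "(\<lambda>n. (X - a n)\<^sup>2) \<longlonglongrightarrow> (X - Y)\<^sup>2"
    unfolding a_def Y_def gn_def by (intro tendsto_intros trunc_lim[OF g])
  have lim2: "(\<lambda>n. e n * (4 * Y)) \<longlonglongrightarrow> 0 * (4 * Y)"
    unfolding e_def dn_def gn_def by (intro tendsto_intros tail_lim[OF g])
  have "(X - Y)\<^sup>2 \<le> 0 * (4 * Y)"
    by (rule tendsto_le[OF trivial_limit_sequentially lim2 lim1]) (simp add: key)
  then have "(X - Y)\<^sup>2 = 0" by (simp add: antisym)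
  then show ?thesis unfolding X_def Y_def by simp
qed

lemma orth:
  assumes g: "g \<in> L2 H"
  shows "(\<integral>x. Kop H mu A g x * mu x $ i \<partial>H) = 0"
proof -
  define gn where "gn n = trunc g (real n)" for n
  define dn where "dn n = (\<lambda>x. g x - gn n x)" for n
  let ?K = "Kop H mu A g"
  let ?Kn = "\<lambda>n. Kop H mu A (gn n)"
  define c where "c = (\<integral>x. ?K x * mu x $ i \<partial>H)"
  define M where "M = (\<integral>x. (mu x $ i)\<^sup>2 \<partial>H)"
  define e where "e n = (\<integral>x. (dn n x)\<^sup>2 \<partial>H)" for n
  have gnL2: "gn n \<in> L2 H" for n unfolding gn_def by (rule trunc_L2[OF g])
  have dnL2: "dn n \<in> L2 H" for n unfolding dn_def by (rule L2_diff[OF g gnL2])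
  have KL2: "?K \<in> L2 H" by (rule Kop_L2(1)[OF g])
  have KnL2: "?Kn n \<in> L2 H" for n by (rule Kop_L2(1)[OF gnL2])
  have M0: "0 \<le> M" unfolding M_def by simp
  have Kn0: "(\<integral>x. ?Kn n x * mu x $ i \<partial>H) = 0" for n
  proof -
    have TnL2: "Top H mu A (gn n) \<in> L2 H"
      unfolding gn_def by (rule Top_L2_trunc[OF trunc_L2[OF g] trunc_tr])
    have "(\<integral>x. ?Kn n x * mu x $ i \<partial>H) = (\<integral>x. gn n x * mu x $ i - Top H mu A (gn n) x * mu x $ i \<partial>H)"
      by (intro Bochner_Integration.integral_cong) (auto simp: Kop_def algebra_simps)
    also have "\<dots> = (\<integral>x. gn n x * mu x $ i \<partial>H) - (\<integral>x. Top H mu A (gn n) x * mu x $ i \<partial>H)"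
      by (rule Bochner_Integration.integral_diff[OF L2_mult_integrable[OF gnL2 mu_L2] L2_mult_integrable[OF TnL2 mu_L2]])
    also have "(\<integral>x. Top H mu A (gn n) x * mu x $ i \<partial>H) = (\<integral>x. gn n x * mu x $ i \<partial>H)"
      unfolding gn_def by (rule orth_trunc[OF trunc_L2[OF g] trunc_tr])
    finally show ?thesis by simp
  qed
  have key: "c\<^sup>2 \<le> e n * M" for n
  proof -
    have dL2: "(\<lambda>x. ?K x - ?Kn n x) \<in> L2 H" by (rule L2_diff[OF KL2 KnL2])
    have "c = c - (\<integral>x. ?Kn n x * mu x $ i \<partial>H)" by (simp add: Kn0)
    also have "\<dots> = (\<integral>x. (?K x - ?Kn n x) * mu x $ i \<partial>H)"
      unfolding c_def
      by (subst Bochner_Integration.integral_diff[symmetric, OF L2_mult_integrable[OF KL2 mu_L2] L2_mult_integrable[OF KnL2 mu_L2]])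
         (auto simp: algebra_simps)
    finally have "c\<^sup>2 \<le> (\<integral>x. (?K x - ?Kn n x)\<^sup>2 \<partial>H) * M"
      unfolding M_def using real_Cauchy_Schwarz_int[OF dL2 mu_L2] by simp
    also have "(\<integral>x. (?K x - ?Kn n x)\<^sup>2 \<partial>H) = (\<integral>x. (Kop H mu A (dn n) x)\<^sup>2 \<partial>H)"
      unfolding dn_def by (simp add: Kop_diff[OF g gnL2])
    also have "\<dots> \<le> e n" unfolding e_def by (rule Kop_L2(2)[OF dnL2])
    finally show ?thesis using M0 by (simp add: mult_right_mono)
  qed
  have lim2: "(\<lambda>n. e n * M) \<longlonglongrightarrow> 0 * M"
    unfolding e_def dn_def gn_def by (intro tendsto_intros tail_lim[OF g])
  have "c\<^sup>2 \<le> 0 * M"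
    by (rule tendsto_le[OF trivial_limit_sequentially lim2 tendsto_const]) (simp add: key)
  then have "c\<^sup>2 = 0" by (simp add: antisym)
  then show ?thesis unfolding c_def by simp
qed

lemma orth_vec:
  assumes g: "g \<in> L2 H"
  shows "(\<integral>y. Kop H mu A g y *\<^sub>R mu y \<partial>H) = 0"
proof -
  have KL2: "Kop H mu A g \<in> L2 H" by (rule Kop_L2(1)[OF g])
  have int: "integrable H (\<lambda>y. Kop H mu A g y *\<^sub>R mu y)"
    by (rule integrable_vec) (simp add: L2_mult_integrable[OF KL2 mu_L2])
  show ?thesis
    by (simp add: vec_eq_iff integral_vec_nth[OF int] orth[OF g])
qed

lemma inner_pres:
  assumes g1: "g1 \<in> L2 H" and g2: "g2 \<in> L2 H"
  shows "(\<integral>x. Kop H mu A g1 x * Kop H mu A g2 x \<partial>H) = (\<integral>x. g1 x * g2 x \<partial>H)"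
proof -
  let ?K1 = "Kop H mu A g1" and ?K2 = "Kop H mu A g2"
  have K1: "?K1 \<in> L2 H" by (rule Kop_L2(1)[OF g1])
  have K2: "?K2 \<in> L2 H" by (rule Kop_L2(1)[OF g2])
  have sL2: "(\<lambda>x. g1 x + g2 x) \<in> L2 H" by (rule L2_add[OF g1 g2])
  have expand: "(\<integral>x. (u x + v x)\<^sup>2 \<partial>H) = (\<integral>x. (u x)\<^sup>2 \<partial>H) + 2 * (\<integral>x. u x * v x \<partial>H) + (\<integral>x. (v x)\<^sup>2 \<partial>H)"
    if u: "u \<in> L2 H" and v: "v \<in> L2 H" for u v
  proof -
    have "(\<integral>x. (u x + v x)\<^sup>2 \<partial>H) = (\<integral>x. (u x)\<^sup>2 + 2 * (u x * v x) + (v x)\<^sup>2 \<partial>H)"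
      by (intro Bochner_Integration.integral_cong) (auto simp: power2_eq_square algebra_simps)
    also have "\<dots> = (\<integral>x. (u x)\<^sup>2 \<partial>H) + 2 * (\<integral>x. u x * v x \<partial>H) + (\<integral>x. (v x)\<^sup>2 \<partial>H)"
      using u v L2_mult_integrable[OF u v] by (simp add: L2_def)
    finally show ?thesis .
  qed
  have "(\<integral>x. (Kop H mu A (\<lambda>x. g1 x + g2 x) x)\<^sup>2 \<partial>H) = (\<integral>x. (g1 x + g2 x)\<^sup>2 \<partial>H)"
    by (rule iso[OF sL2])
  moreover have "(\<integral>x. (Kop H mu A (\<lambda>x. g1 x + g2 x) x)\<^sup>2 \<partial>H) = (\<integral>x. (?K1 x + ?K2 x)\<^sup>2 \<partial>H)"
    by (simp add: Kop_add[OF g1 g2])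
  ultimately have "(\<integral>x. (?K1 x + ?K2 x)\<^sup>2 \<partial>H) = (\<integral>x. (g1 x + g2 x)\<^sup>2 \<partial>H)" by simp
  then show ?thesis
    unfolding expand[OF K1 K2] expand[OF g1 g2] iso[OF g1] iso[OF g2] by simp
qed

lemma Kop_inj:
  assumes g1: "g1 \<in> L2 H" and g2: "g2 \<in> L2 H" and eq: "Kop H mu A g1 = Kop H mu A g2"
  shows "g1 = g2"
proof -
  define d where "d = (\<lambda>x. g1 x - g2 x)"
  have dL2: "d \<in> L2 H" unfolding d_def by (rule L2_diff[OF g1 g2])
  have Kd: "Kop H mu A d x = 0" for x unfolding d_def Kop_diff[OF g1 g2] eq by simp
  have "(\<integral>x. (d x)\<^sup>2 \<partial>H) = 0" using iso[OF dL2] by (simp add: Kd)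
  then have AEd: "AE x in H. (d x)\<^sup>2 = 0"
    using dL2 by (subst (asm) integral_nonneg_eq_0_iff_AE) (auto simp: L2_def)
  have aa0: "aa d t = 0" for t
  proof -
    have "aa d t = (\<integral>y. (0::real^'q) \<partial>H)"
      unfolding aa_def
    proof (rule integral_cong_AE)
      show "(\<lambda>y. trunc d t y *\<^sub>R Phi y) \<in> borel_measurable H"
        using L2_meas[OF dL2] unfolding trunc_def by measurable
      show "(\<lambda>y. 0::real^'q) \<in> borel_measurable H" by simp
      show "AE y in H. trunc d t y *\<^sub>R Phi y = 0"
        using AEd by eventually_elim (auto simp: trunc_def)
    qed
    then show ?thesis by simp
  qed
  have "Top H mu A d x = 0" for x by (simp add: Top_eq[OF dL2] aa0)
  then have "Top H mu A g1 x = Top H mu A g2 x" for x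
    using Top_lin[OF g1 g2, of 1 "-1" x] unfolding d_def by simp
  then have "g1 x = g2 x" for x
    using fun_cong[OF eq, of x] by (simp add: Kop_def)
  then show ?thesis by auto
qed

end

theorem corollary6p1:
  fixes H :: "(real ^ 'p) measure" and F :: "real measure"
    and mu :: "real ^ 'p \<Rightarrow> real ^ 'q"
    and A :: "real \<Rightarrow> (real ^ 'p) set"
    and M :: "'w measure"
    and b :: "(real ^ 'p \<Rightarrow> real) \<Rightarrow> (real \<Rightarrow> real) \<Rightarrow> 'w \<Rightarrow> real"
    and Z :: "'w \<Rightarrow> real ^ 'q"
    and phi :: "real \<Rightarrow> real"
  assumes H: "prob_space H" "sets H = sets borel"
    and F: "prob_space F" "sets F = sets borel"
    and mu_L2: "\<And>i. (\<lambda>x. mu x $ i) \<in> L2 H"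
    and mu_pd: "\<And>v. v \<noteq> 0 \<Longrightarrow> 0 < v \<bullet> ((integral\<^sup>L H (\<lambda>y. outer (mu y))) *v v)"
    and scan: "scanning_family H A"
    and C_nonsing: "\<And>z. invertible (Cmat H mu A z)"
    and M: "prob_space M"
    and b_gauss: "centered_gaussian_process M (L2 H \<times> L2 F) (\<lambda>(g, f). b g f)
                    (\<lambda>(g1, f1) (g2, f2). (\<integral>x. g1 x * g2 x \<partial>H) * (\<integral>x. f1 x * f2 x \<partial>F))"
    and b_lin1: "\<And>g1 g2 f a c. g1 \<in> L2 H \<Longrightarrow> g2 \<in> L2 H \<Longrightarrow> f \<in> L2 F \<Longrightarrow>
                   AE w in M. b (\<lambda>x. a * g1 x + c * g2 x) f w = a * b g1 f w + c * b g2 f w"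
    and b_lin2: "\<And>g f1 f2 a c. g \<in> L2 H \<Longrightarrow> f1 \<in> L2 F \<Longrightarrow> f2 \<in> L2 F \<Longrightarrow>
                   AE w in M. b g (\<lambda>x. a * f1 x + c * f2 x) w = a * b g f1 w + c * b g f2 w"
    and Z: "Z \<in> borel_measurable M"
    and phi: "phi \<in> L2 F"
  shows "centered_gaussian_process M (L2 H)
           (\<lambda>g w. b (Kop H mu A g) phi w
                   - (integral\<^sup>L H (\<lambda>y. Kop H mu A g y *\<^sub>R mu y)) \<bullet> Z w)
           (\<lambda>g1 g2. (\<integral>x. g1 x * g2 x \<partial>H) * (\<integral>x. (phi x)\<^sup>2 \<partial>F))"
proof -
  interpret S: scan_setup H mu A
    using H mu_L2 scan C_nonsing by (intro scan_setup.intro) auto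
  let ?W = "\<lambda>g w. b (Kop H mu A g) phi w - (integral\<^sup>L H (\<lambda>y. Kop H mu A g y *\<^sub>R mu y)) \<bullet> Z w"
  let ?R' = "\<lambda>(g1, f1) (g2, f2). (\<integral>x. g1 x * g2 x \<partial>H) * (\<integral>x. f1 x * f2 x \<partial>F)"
  have W: "?W g = b (Kop H mu A g) phi" if g: "g \<in> L2 H" for g
    by (rule ext) (simp add: S.orth_vec[OF g])
  have bm: "\<forall>t\<in>L2 H \<times> L2 F. (\<lambda>(g, f). b g f) t \<in> borel_measurable M"
    using b_gauss unfolding centered_gaussian_process_def by blast
  have bg: "\<And>J (c::_ \<Rightarrow> real). finite J \<and> J \<subseteq> L2 H \<times> L2 F \<Longrightarrow>
      real_gaussian M (\<lambda>w. \<Sum>t\<in>J. c t * (\<lambda>(g, f). b g f) t w) 0 (\<Sum>s\<in>J. \<Sum>t\<in>J. c s * c t * ?R' s t)"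
    using b_gauss unfolding centered_gaussian_process_def by blast
  show ?thesis
    unfolding centered_gaussian_process_def
  proof (intro conjI ballI allI impI)
    fix g assume g: "g \<in> L2 H"
    have "(Kop H mu A g, phi) \<in> L2 H \<times> L2 F" using S.Kop_L2(1)[OF g] phi by simp
    then have "b (Kop H mu A g) phi \<in> borel_measurable M" using bm by auto
    then show "?W g \<in> borel_measurable M" by (simp add: W[OF g])
  next
    fix J and c :: "(real ^ 'p \<Rightarrow> real) \<Rightarrow> real"
    assume Jc: "finite J \<and> J \<subseteq> L2 H"
    define \<iota> where "\<iota> g = (Kop H mu A g, phi)" for g
    have inj: "inj_on \<iota> J"
    proof (rule inj_onI)
      fix x y assume "x \<in> J" "y \<in> J" "\<iota> x = \<iota> y"
      then show "x = y" using S.Kop_inj[of x y] Jc by (auto simp: \<iota>_def)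
    qed
    define c' where "c' u = c (the_inv_into J \<iota> u)" for u
    have c'i: "c' (\<iota> t) = c t" if "t \<in> J" for t
      using that by (simp add: c'_def the_inv_into_f_f[OF inj])
    have sub: "\<iota> ` J \<subseteq> L2 H \<times> L2 F" using Jc S.Kop_L2(1) phi by (auto simp: \<iota>_def)
    have fin: "finite (\<iota> ` J)" using Jc by simp
    have G: "real_gaussian M (\<lambda>w. \<Sum>u\<in>\<iota> ` J. c' u * (\<lambda>(g, f). b g f) u w) 0
        (\<Sum>s\<in>\<iota> ` J. \<Sum>t\<in>\<iota> ` J. c' s * c' t * ?R' s t)"
      using bg[of "\<iota> ` J" c'] fin sub by blast
    have e1: "(\<lambda>w. \<Sum>u\<in>\<iota> ` J. c' u * (\<lambda>(g, f). b g f) u w) = (\<lambda>w. \<Sum>t\<in>J. c t * ?W t w)"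
    proof (rule ext)
      fix w
      have "(\<Sum>u\<in>\<iota> ` J. c' u * (\<lambda>(g, f). b g f) u w) = (\<Sum>t\<in>J. c' (\<iota> t) * (\<lambda>(g, f). b g f) (\<iota> t) w)"
        by (rule sum.reindex[OF inj, unfolded comp_def])
      also have "\<dots> = (\<Sum>t\<in>J. c t * ?W t w)"
      proof (rule sum.cong[OF refl])
        fix t assume t: "t \<in> J"
        then have tL: "t \<in> L2 H" using Jc by auto
        show "c' (\<iota> t) * (\<lambda>(g, f). b g f) (\<iota> t) w = c t * ?W t w"
          using c'i[OF t] S.orth_vec[OF tL] by (simp add: \<iota>_def)
      qed
      finally show "(\<Sum>u\<in>\<iota> ` J. c' u * (\<lambda>(g, f). b g f) u w) = (\<Sum>t\<in>J. c t * ?W t w)" .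
    qed
    have e2: "(\<Sum>s\<in>\<iota> ` J. \<Sum>t\<in>\<iota> ` J. c' s * c' t * ?R' s t) =
        (\<Sum>s\<in>J. \<Sum>t\<in>J. c s * c t * ((\<integral>x. s x * t x \<partial>H) * (\<integral>x. (phi x)\<^sup>2 \<partial>F)))"
    proof -
      have "(\<Sum>s\<in>\<iota> ` J. \<Sum>t\<in>\<iota> ` J. c' s * c' t * ?R' s t) = (\<Sum>s\<in>J. \<Sum>t\<in>J. c' (\<iota> s) * c' (\<iota> t) * ?R' (\<iota> s) (\<iota> t))"
        by (simp add: sum.reindex[OF inj])
      also have "\<dots> = (\<Sum>s\<in>J. \<Sum>t\<in>J. c s * c t * ((\<integral>x. s x * t x \<partial>H) * (\<integral>x. (phi x)\<^sup>2 \<partial>F)))"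
      proof (intro sum.cong refl)
        fix s t assume s: "s \<in> J" and t: "t \<in> J"
        then have sL: "s \<in> L2 H" and tL: "t \<in> L2 H" using Jc by auto
        show "c' (\<iota> s) * c' (\<iota> t) * ?R' (\<iota> s) (\<iota> t) = c s * c t * ((\<integral>x. s x * t x \<partial>H) * (\<integral>x. (phi x)\<^sup>2 \<partial>F))"
          using c'i[OF s] c'i[OF t] S.inner_pres[OF sL tL] by (simp add: \<iota>_def power2_eq_square)
      qed
      finally show ?thesis .
    qed
    show "real_gaussian M (\<lambda>w. \<Sum>t\<in>J. c t * ?W t w) 0
        (\<Sum>s\<in>J. \<Sum>t\<in>J. c s * c t * ((\<integral>x. s x * t x \<partial>H) * (\<integral>x. (phi x)\<^sup>2 \<partial>F)))"
      using G unfolding e1 e2 .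
  qed
qed

end
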